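(* Let $\mathfrak g$ be an $8$-dimensional filiform Lie algebra with associated triple $(4,5,8)$, and let $\alpha_1,\alpha_2,\gamma_1,\gamma_2,\beta_{12},\beta_{22},\beta_{13},\beta_{23},\beta_{33}$ be its parameters with respect to an adapted basis $\{e_h\}$. Then $\alpha_1=0$, $\alpha_2=-\gamma_1$, $\gamma_2=-\tfrac52\beta_{12}$, $\gamma_1\ne0$; moreover $[C^3\mathfrak g,C^3\mathfrak g]=[C^3\mathfrak g,C^4\mathfrak g]=\langle e_2\rangle$, $[C^3\mathfrak g,C^5\mathfrak g]=\{0\}$, $[C^2\mathfrak g,C^2\mathfrak g]=[C^2\mathfrak g,C^3\mathfrak g]=\langle e_2,\beta_{12}e_3\rangle$, $[C^2\mathfrak g,C^4\mathfrak g]=[C^2\mathfrak g,C^5\mathfrak g]=\langle e_2\rangle$, $[C^2\mathfrak g,C^6\mathfrak g]=\{0\}$. Consequently $$\mathrm{HP}_{\mathfrak g}-\mathrm{HP}^{(0)}_{\mathfrak g}=c\,(t^2s^2+t^2s^3+t^3s^2)+(t^2s^4+t^3s^3+t^4s^2)+(t^2s^5+t^3s^4+t^4s^3+t^5s^2),$$ with $c=2$ if $\beta_{12}\ne0$ and $c=1$ if $\beta_{12}=0$; both cases occur, so $\mathrm{HP}$ separates two isomorphism classes of filiform Lie algebras with triple $(4,5,8)$.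
   Context: All Lie algebras are over $\mathbb C$; $C^1\mathfrak g=\mathfrak g$, $C^k\mathfrak g=[C^{k-1}\mathfrak g,\mathfrak g]$. A Lie algebra is filiform if $\dim\mathfrak g=n\ge2$ and $\dim C^k\mathfrak g=n-k$ for $2\le k\le n$. An adapted basis of a filiform $\mathfrak g$ is a basis $\{e_1,\dots,e_n\}$ with $[e_1,e_h]=e_{h-1}$ ($3\le h\le n$), $[e_2,e_h]=0$ ($1\le h\le n$), $[e_3,e_h]=0$ ($2\le h\le n$); then $C^k\mathfrak g=\langle e_2,\dots,e_{n-k+1}\rangle$. For non-model filiform $\mathfrak g$, $z_1=\min\{k\ge4:[e_k,e_n]\ne0\}$, $z_2=\min\{k\ge4:[e_k,e_{k+1}]\ne0\}$ (in any adapted basis) are invariants; $(z_1,z_2,n)$ is the associated triple. $P_h(u)$ is the $h$-th coordinate of $u$ in $\{e_h\}$. General law (known result) for triple $(z_1,z_2,n)$: there are complex numbers $\alpha_i$ ($1\le i\le z_2-z_1+1$), $\gamma_j$ ($1\le j\le n-z_2-1$), $\beta_{k\ell}$ ($2\le\ell\le n-z_2$, $1\le k<z_2-z_1+\ell$), the parameters, with $[e_1,e_h]=e_{h-1}$; $[e_{z_1+i},e_{z_2+1}]=\alpha_1e_{i+2}+\dots+\alpha_{i+1}e_2$ ($0\le i\le z_2-z_1$); $[e_{z_1},e_{z_2+j}]=\alpha_1e_{j+1}+\gamma_1e_j+\dots+\gamma_{j-1}e_2$ ($2\le j\le n-z_2$); $[e_{z_1+k},e_{z_2+\ell}]=\sum_{h=2}^{k+\ell}P_h([e_{z_1+k-1},e_{z_2+\ell}]+[e_{z_1+k},e_{z_2+\ell-1}])e_{h+1}+\beta_{k\ell}e_2$;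 all other brackets $[e_a,e_b]$, $2\le a<b$, zero. For $(4,5,8)$ the parameters are $\alpha_1,\alpha_2,\gamma_1,\gamma_2,\beta_{12},\beta_{22},\beta_{13},\beta_{23},\beta_{33}$. Hilbert polynomial: $\mathrm{HP}_{\mathfrak g}(t,s)=\sum_{k,\ell\ge1}\dim[C^k\mathfrak g,C^\ell\mathfrak g]\,t^ks^\ell$; $\mathrm{HP}^{(0)}_{\mathfrak g}=(n-2)ts+\sum_{2\le k\le n-2}(n-k-1)(t^ks+ts^k)$. *)

theory Defs
  imports Complex_Main "HOL-Library.Function_Algebras"
begin

text \<open>Vectors of an n-dimensional Lie algebra with basis e_1..e_n are coordinate
  functions nat => complex supported on {1..n}; the bracket is determined by
  structure constants c a b h = P_h([e_a,e_b]).\<close>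

type_synonym vect = "nat \<Rightarrow> complex"
type_synonym sconst = "nat \<Rightarrow> nat \<Rightarrow> nat \<Rightarrow> complex"

definition fscale :: "complex \<Rightarrow> vect \<Rightarrow> vect" where
  "fscale a v = (\<lambda>h. a * v h)"

global_interpretation fv: vector_space fscale
  by unfold_locales (auto simp: fscale_def fun_eq_iff algebra_simps)

definition Vn :: "nat \<Rightarrow> vect set" where
  "Vn n = {v. \<forall>h. h \<notin> {1..n} \<longrightarrow> v h = 0}"

definition ev :: "nat \<Rightarrow> vect" where
  "ev a = (\<lambda>h. if h = a then 1 else 0)"

definition lie_br :: "nat \<Rightarrow> sconst \<Rightarrow> vect \<Rightarrow> vect \<Rightarrow> vect" where
  "lie_br n c u v = (\<lambda>h. if h \<in> {1..n}
      then (\<Sum>a\<in>{1..n}. \<Sum>b\<in>{1..n}. u a * v b * c a b h) else 0)"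

definition is_lie_algebra :: "nat \<Rightarrow> sconst \<Rightarrow> bool" where
  "is_lie_algebra n c \<longleftrightarrow>
     (\<forall>x\<in>Vn n. lie_br n c x x = 0) \<and>
     (\<forall>x\<in>Vn n. \<forall>y\<in>Vn n. \<forall>z\<in>Vn n.
        lie_br n c x (lie_br n c y z) + lie_br n c y (lie_br n c z x)
          + lie_br n c z (lie_br n c x y) = 0)"

definition brs :: "nat \<Rightarrow> sconst \<Rightarrow> vect set \<Rightarrow> vect set \<Rightarrow> vect set" where
  "brs n c A B = fv.span {lie_br n c x y | x y. x \<in> A \<and> y \<in> B}"

text \<open>Lower central series: C^1 = g, C^k = [C^(k-1), g] (C^0 unused, set to g).\<close>
fun lcs :: "nat \<Rightarrow> sconst \<Rightarrow> nat \<Rightarrow> vect set" where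
  "lcs n c 0 = Vn n"
| "lcs n c (Suc 0) = Vn n"
| "lcs n c (Suc (Suc k)) = brs n c (lcs n c (Suc k)) (Vn n)"

definition filiform :: "nat \<Rightarrow> sconst \<Rightarrow> bool" where
  "filiform n c \<longleftrightarrow> n \<ge> 2 \<and> fv.dim (Vn n) = n \<and>
     (\<forall>k. 2 \<le> k \<and> k \<le> n \<longrightarrow> fv.dim (lcs n c k) = n - k)"

definition adapted :: "nat \<Rightarrow> sconst \<Rightarrow> bool" where
  "adapted n c \<longleftrightarrow>
     (\<forall>h. 3 \<le> h \<and> h \<le> n \<longrightarrow> lie_br n c (ev 1) (ev h) = ev (h - 1)) \<and>
     (\<forall>h. 1 \<le> h \<and> h \<le> n \<longrightarrow> lie_br n c (ev 2) (ev h) = 0) \<and>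
     (\<forall>h. 2 \<le> h \<and> h \<le> n \<longrightarrow> lie_br n c (ev 3) (ev h) = 0)"

definition lie_iso :: "nat \<Rightarrow> sconst \<Rightarrow> sconst \<Rightarrow> bool" where
  "lie_iso n c1 c2 \<longleftrightarrow> (\<exists>f. bij_betw f (Vn n) (Vn n) \<and>
     (\<forall>x\<in>Vn n. \<forall>y\<in>Vn n. f (x + y) = f x + f y) \<and>
     (\<forall>x\<in>Vn n. \<forall>a. f (fscale a x) = fscale a (f x)) \<and>
     (\<forall>x\<in>Vn n. \<forall>y\<in>Vn n. f (lie_br n c1 x y) = lie_br n c2 (f x) (f y)))"

definition model :: "nat \<Rightarrow> sconst" where
  "model n a b h = (if a = 1 \<and> 3 \<le> b \<and> b \<le> n \<and> h = b - 1 then 1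
                    else if b = 1 \<and> 3 \<le> a \<and> a \<le> n \<and> h = a - 1 then -1 else 0)"

definition non_model :: "nat \<Rightarrow> sconst \<Rightarrow> bool" where
  "non_model n c \<longleftrightarrow> \<not> lie_iso n c (model n)"

definition z1 :: "nat \<Rightarrow> sconst \<Rightarrow> nat" where
  "z1 n c = (LEAST k. 4 \<le> k \<and> lie_br n c (ev k) (ev n) \<noteq> 0)"

definition z2 :: "nat \<Rightarrow> sconst \<Rightarrow> nat" where
  "z2 n c = (LEAST k. 4 \<le> k \<and> lie_br n c (ev k) (ev (k + 1)) \<noteq> 0)"

text \<open>General law for the triple (4,5,8) with parameters
  a1 a2 (alpha), g1 g2 (gamma), b12 b22 b13 b23 b33 (beta).\<close>
definition law_rec :: "(nat \<Rightarrow> nat \<Rightarrow> vect) \<Rightarrow> nat \<Rightarrow> nat \<Rightarrow> complex \<Rightarrow> vect" where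
  "law_rec B k l b = (\<Sum>h\<in>{2..k+l}. fscale ((B (4+k-1) (5+l) + B (4+k) (5+l-1)) h) (ev (h+1)))
                      + fscale b (ev 2)"

definition law458 :: "sconst \<Rightarrow> complex \<Rightarrow> complex \<Rightarrow> complex \<Rightarrow> complex \<Rightarrow> complex \<Rightarrow> complex
    \<Rightarrow> complex \<Rightarrow> complex \<Rightarrow> complex \<Rightarrow> bool" where
  "law458 c a1 a2 g1 g2 b12 b22 b13 b23 b33 \<longleftrightarrow>
    (let B = (\<lambda>a b. lie_br 8 c (ev a) (ev b)) in
     (\<forall>h. 3 \<le> h \<and> h \<le> 8 \<longrightarrow> B 1 h = ev (h - 1)) \<and>
     B 4 6 = fscale a1 (ev 2) \<and>
     B 5 6 = fscale a1 (ev 3) + fscale a2 (ev 2) \<and>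
     B 4 7 = fscale a1 (ev 3) + fscale g1 (ev 2) \<and>
     B 4 8 = fscale a1 (ev 4) + fscale g1 (ev 3) + fscale g2 (ev 2) \<and>
     B 5 7 = law_rec B 1 2 b12 \<and>
     B 6 7 = law_rec B 2 2 b22 \<and>
     B 5 8 = law_rec B 1 3 b13 \<and>
     B 6 8 = law_rec B 2 3 b23 \<and>
     B 7 8 = law_rec B 3 3 b33 \<and>
     (\<forall>a b. 2 \<le> a \<and> a < b \<and> b \<le> 8 \<and>
        (a, b) \<notin> {(4,6),(5,6),(4,7),(4,8),(5,7),(6,7),(5,8),(6,8),(7,8)} \<longrightarrow> B a b = 0))"

text \<open>Hilbert polynomial as its coefficient array: coefficient of t^k s^l.\<close>
definition HP :: "nat \<Rightarrow> sconst \<Rightarrow> nat \<Rightarrow> nat \<Rightarrow> int" where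
  "HP n c k l = (if 1 \<le> k \<and> 1 \<le> l then int (fv.dim (brs n c (lcs n c k) (lcs n c l))) else 0)"

definition HP0 :: "nat \<Rightarrow> nat \<Rightarrow> nat \<Rightarrow> int" where
  "HP0 n k l = (if k = 1 \<and> l = 1 then int n - 2
     else if l = 1 \<and> 2 \<le> k \<and> k + 2 \<le> n then int n - int k - 1
     else if k = 1 \<and> 2 \<le> l \<and> l + 2 \<le> n then int n - int l - 1
     else 0)"

text \<open>Monomial t^i s^j as coefficient array.\<close>
definition mon :: "nat \<Rightarrow> nat \<Rightarrow> nat \<Rightarrow> nat \<Rightarrow> int" where
  "mon i j k l = (if k = i \<and> l = j then 1 else 0)"

definition fil458 :: "sconst \<Rightarrow> complex \<Rightarrow> complex \<Rightarrow> complex \<Rightarrow> complex \<Rightarrow> complex \<Rightarrow> complex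
    \<Rightarrow> complex \<Rightarrow> complex \<Rightarrow> complex \<Rightarrow> bool" where
  "fil458 c a1 a2 g1 g2 b12 b22 b13 b23 b33 \<longleftrightarrow>
     is_lie_algebra 8 c \<and> filiform 8 c \<and> adapted 8 c \<and> non_model 8 c \<and>
     z1 8 c = 4 \<and> z2 8 c = 5 \<and> law458 c a1 a2 g1 g2 b12 b22 b13 b23 b33"

end

theory Submission
  imports Defs
begin

lemma sum_apply_fun: "(sum f A :: vect) x = (\<Sum>a\<in>A. f a x)"
  by (induction A rule: infinite_finite_induct) auto

lemma fscale_apply: "fscale a v h = a * v h" by (simp add: fscale_def)
lemma ev_apply: "ev a h = (if h = a then 1 else 0)" by (simp add: ev_def)

lemma span_ev: assumes "finite R" shows "fv.span (ev ` R) = {v. \<forall>h. h \<notin> R \<longrightarrow> v h = 0}"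
proof
  show "fv.span (ev ` R) \<subseteq> {v. \<forall>h. h \<notin> R \<longrightarrow> v h = 0}"
    by (rule fv.span_minimal) (auto simp: fv.subspace_def ev_def fscale_apply)
  show "{v. \<forall>h. h \<notin> R \<longrightarrow> v h = 0} \<subseteq> fv.span (ev ` R)"
  proof
    fix v :: vect assume v: "v \<in> {v. \<forall>h. h \<notin> R \<longrightarrow> v h = 0}"
    have "v = (\<Sum>r\<in>R. fscale (v r) (ev r))"
      using v assms by (auto simp: fun_eq_iff sum_apply_fun fscale_apply ev_apply if_distrib cong: if_cong)
    also have "\<dots> \<in> fv.span (ev ` R)"
      by (intro fv.span_sum fv.span_scale fv.span_base) auto
    finally show "v \<in> fv.span (ev ` R)" .
  qed
qed

lemma Vn_span: "Vn n = fv.span (ev ` {1..n})"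
  by (simp add: span_ev Vn_def)

lemma inj_ev: "inj ev"
  by (auto simp: inj_def ev_def fun_eq_iff)

lemma indep_ev: assumes "finite R" shows "fv.independent (ev ` R)"
proof (rule fv.independent_if_scalars_zero)
  show "finite (ev ` R)" using assms by simp
  fix f x assume s: "(\<Sum>x\<in>ev ` R. fscale (f x) x) = 0" and x: "x \<in> ev ` R"
  then obtain r where r: "r \<in> R" "x = ev r" by auto
  have "(\<Sum>x\<in>ev ` R. fscale (f x) x) r = 0" using s by simp
  hence "(\<Sum>q\<in>R. fscale (f (ev q)) (ev q) r) = 0"
    by (simp add: sum_apply_fun sum.reindex inj_on_subset[OF inj_ev])
  hence "f (ev r) = 0" using r assms by (simp add: fscale_apply ev_apply if_distrib cong: if_cong)
  thus "f x = 0" using r by simp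
qed

lemma dim_span_ev: "finite R \<Longrightarrow> fv.dim (fv.span (ev ` R)) = card R"
  by (simp add: fv.dim_span_eq_card_independent fv.dim_eq_card_independent indep_ev card_image inj_on_subset[OF inj_ev])


lemma lie_br_add1: "lie_br n c (u + w) v = lie_br n c u v + lie_br n c w v"
  by (auto simp: lie_br_def fun_eq_iff algebra_simps sum.distrib)
lemma lie_br_add2: "lie_br n c v (u + w) = lie_br n c v u + lie_br n c v w"
  by (auto simp: lie_br_def fun_eq_iff algebra_simps sum.distrib)
lemma lie_br_scale1: "lie_br n c (fscale a u) v = fscale a (lie_br n c u v)"
  by (auto simp: lie_br_def fun_eq_iff sum_distrib_left mult_ac fscale_apply)
lemma lie_br_scale2: "lie_br n c u (fscale a v) = fscale a (lie_br n c u v)"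
  by (auto simp: lie_br_def fun_eq_iff sum_distrib_left mult_ac fscale_apply)
lemma lie_br_zero1[simp]: "lie_br n c 0 v = 0"
  by (auto simp: lie_br_def fun_eq_iff)
lemma lie_br_zero2[simp]: "lie_br n c v 0 = 0"
  by (auto simp: lie_br_def fun_eq_iff)

lemma ev_mult: "ev a b * x = (if b = a then x else 0)" "x * ev a b = (if b = a then x else 0)"
  by (auto simp: ev_apply)

lemma lie_br_ev: assumes "a \<in> {1..n}" shows
   "lie_br n c (ev a) v = (\<lambda>h. if h \<in> {1..n} then \<Sum>b\<in>{1..n}. v b * c a b h else 0)"
proof -
  have "\<And>aa h. (\<Sum>b\<in>{1..n}. ev a aa * v b * c aa b h) = (if aa = a then \<Sum>b\<in>{1..n}. v b * c a b h else 0)"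
    by (auto simp: ev_apply)
  then show ?thesis using assms by (simp add: lie_br_def fun_eq_iff)
qed

lemma lie_br_zero1'[simp]: "lie_br n c (\<lambda>_. 0) v = 0"
  by (auto simp: lie_br_def fun_eq_iff)
lemma lie_br_zero2'[simp]: "lie_br n c v (\<lambda>_. 0) = 0"
  by (auto simp: lie_br_def fun_eq_iff)
lemma fscale_eq: "(\<lambda>b. a * v b) = fscale a v" by (simp add: fscale_def)

lemma lie_br_ev_ev: "a \<in> {1..n} \<Longrightarrow> b \<in> {1..n} \<Longrightarrow>
   lie_br n c (ev a) (ev b) h = (if h \<in> {1..n} then c a b h else 0)"
  by (simp add: lie_br_ev ev_mult)

lemma lie_br_cong: "(\<And>a b h. a \<in> {1..n} \<Longrightarrow> b \<in> {1..n} \<Longrightarrow> h \<in> {1..n} \<Longrightarrow> c a b h = c' a b h)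
   \<Longrightarrow> lie_br n c = lie_br n c'"
  by (auto simp: lie_br_def fun_eq_iff intro!: sum.cong)

lemma brs_cong: "lie_br n c = lie_br n c' \<Longrightarrow> brs n c = brs n c'"
  by (simp add: brs_def fun_eq_iff)

lemma lcs_cong: assumes "lie_br n c = lie_br n c'" shows "lcs n c k = lcs n c' k"
proof -
  have b: "\<And>A B. brs n c A B = brs n c' A B" using assms by (simp add: brs_def)
  show ?thesis
  proof (induction k rule: nat_less_induct)
    case (1 k)
    consider "k = 0" | "k = 1" | m where "k = Suc (Suc m)" by (metis One_nat_def not0_implies_Suc)
    then show ?case using 1 by cases (auto simp: b)
  qed
qed

lemma br_span_in1:
  assumes x: "x \<in> A" and y: "y \<in> fv.span B"
  shows "lie_br n c x y \<in> fv.span {lie_br n c x y | x y. x \<in> A \<and> y \<in> B}"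
  using y
proof (induction rule: fv.span_induct_alt)
  case base then show ?case by (metis fv.span_zero lie_br_zero1 lie_br_zero2)
next
  case (step b y1 y2)
  have e: "lie_br n c x (fscale b y1 + y2) = fscale b (lie_br n c x y1) + lie_br n c x y2"
    by (simp add: lie_br_add2 lie_br_scale2)
  have "lie_br n c x y1 \<in> {lie_br n c x y | x y. x \<in> A \<and> y \<in> B}"
    using step(1) x by blast
  then have "fscale b (lie_br n c x y1) + lie_br n c x y2 \<in> fv.span {lie_br n c x y | x y. x \<in> A \<and> y \<in> B}"
    by (intro fv.span_add fv.span_scale fv.span_base step(2))
  then show ?case unfolding e .
qed

lemma br_span_in:
  assumes x: "x \<in> fv.span A" and y: "y \<in> fv.span B"
  shows "lie_br n c x y \<in> fv.span {lie_br n c x y | x y. x \<in> A \<and> y \<in> B}"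
  using x
proof (induction rule: fv.span_induct_alt)
  case base then show ?case by (metis fv.span_zero lie_br_zero1 lie_br_zero2)
next
  case (step a x1 x2)
  have e: "lie_br n c (fscale a x1 + x2) y = fscale a (lie_br n c x1 y) + lie_br n c x2 y"
    by (simp add: lie_br_add1 lie_br_scale1)
  have "fscale a (lie_br n c x1 y) + lie_br n c x2 y \<in> fv.span {lie_br n c x y | x y. x \<in> A \<and> y \<in> B}"
    by (intro fv.span_add fv.span_scale br_span_in1 step(1) y step(2))
  then show ?case unfolding e .
qed

lemma brs_span: "brs n c (fv.span A) (fv.span B) = fv.span {lie_br n c x y | x y. x \<in> A \<and> y \<in> B}"
  unfolding brs_def
proof (rule antisym)
  show "fv.span {lie_br n c x y |x y. x \<in> fv.span A \<and> y \<in> fv.span B}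
    \<subseteq> fv.span {lie_br n c x y |x y. x \<in> A \<and> y \<in> B}"
    by (rule fv.span_minimal) (auto intro: br_span_in)
  show "fv.span {lie_br n c x y |x y. x \<in> A \<and> y \<in> B}
    \<subseteq> fv.span {lie_br n c x y |x y. x \<in> fv.span A \<and> y \<in> fv.span B}"
    by (rule fv.span_mono) (auto intro: fv.span_base)
qed

lemma brs_mono: "A \<subseteq> A' \<Longrightarrow> B \<subseteq> B' \<Longrightarrow> brs n c A B \<subseteq> brs n c A' B'"
  unfolding brs_def by (rule fv.span_mono) blast

definition cv :: "complex list \<Rightarrow> nat \<Rightarrow> complex" where
  "cv xs h = (if 2 \<le> h \<and> h - 2 < length xs then xs ! (h - 2) else 0)"

definition U :: "complex \<Rightarrow> complex \<Rightarrow> complex \<Rightarrow> complex \<Rightarrow> complex \<Rightarrow> complex \<Rightarrow> complex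
    \<Rightarrow> complex \<Rightarrow> complex \<Rightarrow> nat \<Rightarrow> nat \<Rightarrow> nat \<Rightarrow> complex" where
  "U a1 a2 g1 g2 b12 b22 b13 b23 b33 a b h =
    (if a = 1 then (if 3 \<le> b \<and> b \<le> 8 \<and> h = b - 1 then 1 else 0)
     else if a = 4 \<and> b = 6 then cv [a1] h
     else if a = 5 \<and> b = 6 then cv [a2, a1] h
     else if a = 4 \<and> b = 7 then cv [g1, a1] h
     else if a = 4 \<and> b = 8 then cv [g2, g1, a1] h
     else if a = 5 \<and> b = 7 then cv [b12, g1+a2, 2*a1] h
     else if a = 6 \<and> b = 7 then cv [b22, b12, g1+a2, 2*a1] h
     else if a = 5 \<and> b = 8 then cv [b13, g2+b12, 2*g1+a2, 3*a1] h
     else if a = 6 \<and> b = 8 then cv [b23, b13+b22, g2+2*b12, 3*g1+2*a2, 5*a1] h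
     else if a = 7 \<and> b = 8 then cv [b33, b23, b13+b22, g2+2*b12, 3*g1+2*a2, 5*a1] h
     else 0)"

definition Tg :: "complex \<Rightarrow> complex \<Rightarrow> complex \<Rightarrow> complex \<Rightarrow> complex \<Rightarrow> complex \<Rightarrow> complex
    \<Rightarrow> complex \<Rightarrow> complex \<Rightarrow> sconst" where
  "Tg a1 a2 g1 g2 b12 b22 b13 b23 b33 a b h =
    (if a < b then U a1 a2 g1 g2 b12 b22 b13 b23 b33 a b h
     else if b < a then - U a1 a2 g1 g2 b12 b22 b13 b23 b33 b a h else 0)"

lemma law_rec_apply: "law_rec B k l b h' =
   (if 3 \<le> h' \<and> h' \<le> k + l + 1 then (B (4+k-1) (5+l) + B (4+k) (5+l-1)) (h' - 1) else 0)
   + (if h' = 2 then b else 0)"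
proof -
  have "(\<Sum>h\<in>{2..k+l}. fscale ((B (4+k-1) (5+l) + B (4+k) (5+l-1)) h) (ev (h+1)) h')
     = (\<Sum>h\<in>{2..k+l}. if h = h' - 1 \<and> h' \<ge> 1 then (B (4+k-1) (5+l) + B (4+k) (5+l-1)) h else 0)"
    by (rule sum.cong) (auto simp: ev_apply fscale_apply)
  also have "\<dots> = (if 3 \<le> h' \<and> h' \<le> k + l + 1 then (B (4+k-1) (5+l) + B (4+k) (5+l-1)) (h' - 1) else 0)"
  proof (cases "1 \<le> h'")
    case True
    then show ?thesis by (simp add: sum.delta) linarith
  next
    case False
    then show ?thesis by simp
  qed
  finally show ?thesis by (simp add: law_rec_def sum_apply_fun ev_apply fscale_apply)
qed


lemma in8: "a \<in> {1..8::nat} \<longleftrightarrow> a=1 \<or> a=2 \<or> a=3 \<or> a=4 \<or> a=5 \<or> a=6 \<or> a=7 \<or> a=8"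
  by auto

lemma sum8: "(\<Sum>j\<in>{1..8::nat}. f j) = f 1 + f 2 + f 3 + f 4 + f 5 + f 6 + f 7 + f 8"
  by (simp add: numeral_eq_Suc atLeastAtMostSuc_conv add_ac)

lemma sum8': "(\<Sum>j\<in>{Suc 0..8}. f j) = f 1 + f 2 + f 3 + f 4 + f 5 + f 6 + f 7 + f 8"
  using sum8 by simp

lemma ev_Vn: "a \<in> {1..n} \<Longrightarrow> ev a \<in> Vn n"
  by (auto simp: Vn_def ev_apply)

lemma Vn_add: "x \<in> Vn n \<Longrightarrow> y \<in> Vn n \<Longrightarrow> x + y \<in> Vn n"
  by (auto simp: Vn_def)

lemma lie_alt_ev: assumes "is_lie_algebra n c" "a \<in> {1..n}"
  shows "lie_br n c (ev a) (ev a) = 0"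
  using assms ev_Vn unfolding is_lie_algebra_def by blast

lemma lie_anti_ev: assumes "is_lie_algebra n c" "a \<in> {1..n}" "b \<in> {1..n}"
  shows "lie_br n c (ev a) (ev b) = - lie_br n c (ev b) (ev a)"
proof -
  have "lie_br n c (ev a + ev b) (ev a + ev b) = 0"
    using assms ev_Vn Vn_add unfolding is_lie_algebra_def by blast
  then have "lie_br n c (ev a) (ev a) + lie_br n c (ev a) (ev b) + (lie_br n c (ev b) (ev a) + lie_br n c (ev b) (ev b)) = 0"
    by (simp add: lie_br_add1 lie_br_add2 add_ac)
  then show ?thesis using lie_alt_ev[OF assms(1,2)] lie_alt_ev[OF assms(1,3)]
    by (simp add: eq_neg_iff_add_eq_0)
qed

lemma c_alt: assumes "is_lie_algebra n c" "a \<in> {1..n}" "h \<in> {1..n}" shows "c a a h = 0"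
  using lie_alt_ev[OF assms(1,2)] lie_br_ev_ev[OF assms(2,2), of c h] assms(3) by simp

lemma c_anti: assumes "is_lie_algebra n c" "a \<in> {1..n}" "b \<in> {1..n}" "h \<in> {1..n}"
  shows "c a b h = - c b a h"
  using fun_cong[OF lie_anti_ev[OF assms(1,2,3)], of h] lie_br_ev_ev[OF assms(2,3), of c h]
    lie_br_ev_ev[OF assms(3,2), of c h] assms(4) by simp

lemma cv_simps: "cv xs 0 = 0" "cv xs (Suc 0) = 0" "cv (x # xs) 2 = x"
  "cv (x # xs) (Suc (Suc (Suc k))) = cv xs (Suc (Suc k))" "cv [] h = 0"
  by (auto simp: cv_def nth_Cons' numeral_eq_Suc)


lemma upto8: "(h::nat) \<le> 8 \<Longrightarrow> h=0 \<or> h=1 \<or> h=2 \<or> h=3 \<or> h=4 \<or> h=5 \<or> h=6 \<or> h=7 \<or> h=8"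
  by arith

lemma fun_eq8: "(\<And>h. h \<le> 8 \<Longrightarrow> f h = g h) \<Longrightarrow> (\<And>h. h > 8 \<Longrightarrow> f h = g h) \<Longrightarrow> f = (g :: vect)"
  by (metis ext not_le)

lemma cv_big: assumes "length xs \<le> 6" "h > 8" shows "cv xs h = 0"
proof -
  have "\<not> h - 2 < length xs" using assms by arith
  then show ?thesis by (simp add: cv_def)
qed

lemma lie_br_big: "h > n \<Longrightarrow> lie_br n c x y h = 0"
  by (simp add: lie_br_def)

context
  fixes c :: sconst and a1 a2 g1 g2 b12 b22 b13 b23 b33 :: complex
  assumes lie: "is_lie_algebra 8 c" and adp: "adapted 8 c"
    and law: "law458 c a1 a2 g1 g2 b12 b22 b13 b23 b33"
begin

abbreviation "B a b \<equiv> lie_br 8 c (ev a) (ev b)"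

lemma L1: "3 \<le> h \<Longrightarrow> h \<le> 8 \<Longrightarrow> B 1 h = ev (h - 1)"
  using law by (simp add: law458_def Let_def)
lemma L1': "3 \<le> h \<Longrightarrow> h \<le> 8 \<Longrightarrow> B (Suc 0) h = ev (h - 1)"
  using L1 by simp

lemma Lz: "2 \<le> a \<Longrightarrow> a < b \<Longrightarrow> b \<le> 8 \<Longrightarrow>
   (a, b) \<notin> {(4,6),(5,6),(4,7),(4,8),(5,7),(6,7),(5,8),(6,8),(7,8)} \<Longrightarrow> B a b = 0"
  using law by (simp add: law458_def Let_def)

lemma L46: "B 4 6 = cv [a1]"
  using law unfolding law458_def Let_def
  by (intro fun_eq8) (auto dest!: upto8 simp: cv_def fscale_apply ev_apply lie_br_big)

lemma L56: "B 5 6 = cv [a2, a1]"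
  using law unfolding law458_def Let_def
  by (intro fun_eq8) (auto dest!: upto8 simp: cv_def fscale_apply ev_apply lie_br_big)

lemma L47: "B 4 7 = cv [g1, a1]"
  using law unfolding law458_def Let_def
  by (intro fun_eq8) (auto dest!: upto8 simp: cv_def fscale_apply ev_apply lie_br_big)

lemma L48: "B 4 8 = cv [g2, g1, a1]"
  using law unfolding law458_def Let_def
  by (intro fun_eq8) (auto dest!: upto8 simp: cv_def fscale_apply ev_apply lie_br_big)

lemma L66: "B 6 6 = 0" "B 7 7 = 0"
  using lie_alt_ev[OF lie] by auto

lemma L57: "B 5 7 = cv [b12, g1+a2, 2*a1]"
proof -
  have "B 5 7 = law_rec (\<lambda>a b. B a b) 1 2 b12" using law by (simp add: law458_def Let_def)
  then show ?thesis
    by (intro fun_eq8) (auto dest!: upto8 simp: law_rec_apply L47 L56 cv_def lie_br_big)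
qed

lemma L67: "B 6 7 = cv [b22, b12, g1+a2, 2*a1]"
proof -
  have "B 6 7 = law_rec (\<lambda>a b. B a b) 2 2 b22" using law by (simp add: law458_def Let_def)
  then show ?thesis
    by (intro fun_eq8) (auto dest!: upto8 simp: law_rec_apply L57 L66 cv_def lie_br_big)
qed

lemma L58: "B 5 8 = cv [b13, g2+b12, 2*g1+a2, 3*a1]"
proof -
  have "B 5 8 = law_rec (\<lambda>a b. B a b) 1 3 b13" using law by (simp add: law458_def Let_def)
  then show ?thesis
    by (intro fun_eq8) (auto dest!: upto8 simp: law_rec_apply L48 L57 cv_def lie_br_big)
qed

lemma L68: "B 6 8 = cv [b23, b13+b22, g2+2*b12, 3*g1+2*a2, 5*a1]"
proof -
  have "B 6 8 = law_rec (\<lambda>a b. B a b) 2 3 b23" using law by (simp add: law458_def Let_def)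
  then show ?thesis
    by (intro fun_eq8) (auto dest!: upto8 simp: law_rec_apply L58 L67 cv_def lie_br_big)
qed

lemma L78: "B 7 8 = cv [b33, b23, b13+b22, g2+2*b12, 3*g1+2*a2, 5*a1]"
proof -
  have "B 7 8 = law_rec (\<lambda>a b. B a b) 3 3 b33" using law by (simp add: law458_def Let_def)
  then show ?thesis
    by (intro fun_eq8) (auto dest!: upto8 simp: law_rec_apply L68 L66 cv_def lie_br_big)
qed

lemma B12: "B (Suc 0) 2 = 0"
proof -
  have "B 2 1 = 0" using adp by (simp add: adapted_def)
  then show ?thesis using lie_anti_ev[OF lie, of 1 2] by simp
qed

lemma BU: assumes "a \<in> {1..8}" "b \<in> {1..8}" "a < b"
  shows "B a b h = U a1 a2 g1 g2 b12 b22 b13 b23 b33 a b h"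
  using assms unfolding in8
  by (elim disjE) (simp_all add: L46 L56 L47 L48 L57 L67 L58 L68 L78 Lz L1' B12 U_def ev_apply)

lemma "B 7 8 h = U a1 a2 g1 g2 b12 b22 b13 b23 b33 7 8 h"
  by (simp add: L78 U_def)
lemma "B 2 3 h = U a1 a2 g1 g2 b12 b22 b13 b23 b33 2 3 h"
  by (simp add: Lz U_def)
lemma "B 1 5 h = U a1 a2 g1 g2 b12 b22 b13 b23 b33 1 5 h"
  by (simp add: L1' U_def ev_apply)

lemma tab: assumes "a \<in> {1..8}" "b \<in> {1..8}" "h \<in> {1..8}"
  shows "c a b h = Tg a1 a2 g1 g2 b12 b22 b13 b23 b33 a b h"
proof -
  consider "a < b" | "b < a" | "a = b" by arith
  then show ?thesis
  proof cases
    case 1 then show ?thesis using BU[OF assms(1,2) 1, of h] lie_br_ev_ev[OF assms(1,2), of c h] assms(3)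
      by (simp add: Tg_def)
  next
    case 2 then show ?thesis using BU[OF assms(2,1) 2, of h] lie_br_ev_ev[OF assms(2,1), of c h] assms(3)
      c_anti[OF lie assms]
      by (simp add: Tg_def)
  next
    case 3 then show ?thesis using c_alt[OF lie assms(1,3)] by (simp add: Tg_def)
  qed
qed

end

lemma jac_coord: assumes lie: "is_lie_algebra n c" and r: "a \<in> {1..n}" "b \<in> {1..n}" "d \<in> {1..n}" "h \<in> {1..n}"
  shows "(\<Sum>j\<in>{1..n}. c b d j * c a j h + c d a j * c b j h + c a b j * c d j h) = 0"
proof -
  have J: "lie_br n c (ev a) (lie_br n c (ev b) (ev d)) + lie_br n c (ev b) (lie_br n c (ev d) (ev a))
          + lie_br n c (ev d) (lie_br n c (ev a) (ev b)) = 0"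
    using lie r ev_Vn unfolding is_lie_algebra_def by blast
  have e: "\<And>x y z. x \<in> {1..n} \<Longrightarrow> y \<in> {1..n} \<Longrightarrow> z \<in> {1..n} \<Longrightarrow>
     lie_br n c (ev x) (lie_br n c (ev y) (ev z)) h = (\<Sum>j\<in>{1..n}. c y z j * c x j h)"
    using r(4) by (auto simp: lie_br_ev ev_mult intro!: sum.cong)
  have "(lie_br n c (ev a) (lie_br n c (ev b) (ev d)) + lie_br n c (ev b) (lie_br n c (ev d) (ev a))
          + lie_br n c (ev d) (lie_br n c (ev a) (ev b))) h = 0" using J by simp
  then show ?thesis using e r by (simp add: sum.distrib)
qed

context
  fixes c :: sconst and a1 a2 g1 g2 b12 b22 b13 b23 b33 :: complex
  assumes lie: "is_lie_algebra 8 c" and adp: "adapted 8 c"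
    and law: "law458 c a1 a2 g1 g2 b12 b22 b13 b23 b33"
begin

lemma jacT: assumes "a \<in> {1..8}" "b \<in> {1..8}" "d \<in> {1..8}" "h \<in> {1..8}"
  shows "(\<Sum>j\<in>{1..8}. Tg a1 a2 g1 g2 b12 b22 b13 b23 b33 b d j * Tg a1 a2 g1 g2 b12 b22 b13 b23 b33 a j h
     + Tg a1 a2 g1 g2 b12 b22 b13 b23 b33 d a j * Tg a1 a2 g1 g2 b12 b22 b13 b23 b33 b j h
     + Tg a1 a2 g1 g2 b12 b22 b13 b23 b33 a b j * Tg a1 a2 g1 g2 b12 b22 b13 b23 b33 d j h) = 0"
proof -
  have "(\<Sum>j\<in>{1..8}. c b d j * c a j h + c d a j * c b j h + c a b j * c d j h) = 0"
    by (rule jac_coord[OF lie assms])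
  moreover have "(\<Sum>j\<in>{1..8}. c b d j * c a j h + c d a j * c b j h + c a b j * c d j h) =
     (\<Sum>j\<in>{1..8}. Tg a1 a2 g1 g2 b12 b22 b13 b23 b33 b d j * Tg a1 a2 g1 g2 b12 b22 b13 b23 b33 a j h
     + Tg a1 a2 g1 g2 b12 b22 b13 b23 b33 d a j * Tg a1 a2 g1 g2 b12 b22 b13 b23 b33 b j h
     + Tg a1 a2 g1 g2 b12 b22 b13 b23 b33 a b j * Tg a1 a2 g1 g2 b12 b22 b13 b23 b33 d j h)"
    by (rule sum.cong) (use assms in \<open>simp_all add: tab[OF lie adp law]\<close>)
  ultimately show ?thesis by simp
qed

lemma c_a1: "a1 = 0"
proof -
  have "6 * a1^2 = 0"
    using jacT[of 4 6 8 2] by (simp add: sum8 sum8' Tg_def U_def cv_def power2_eq_square)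
  then show ?thesis by simp
qed

lemma c_a2: "a2 = - g1"
proof -
  have "2 * (a2 + g1)^2 = 0"
    using jacT[of 5 7 8 2] c_a1 by (simp add: sum8 sum8' Tg_def U_def cv_def power2_eq_square algebra_simps)
  then show ?thesis by (simp add: add_eq_0_iff)
qed

lemma c_g2: "g1 * (2 * g2 + 5 * b12) = 0"
proof -
  show ?thesis
    using jacT[of 6 7 8 2] c_a1 c_a2 by (simp add: sum8 sum8' Tg_def U_def cv_def algebra_simps)
qed

end

definition T :: "complex \<Rightarrow> complex \<Rightarrow> complex \<Rightarrow> complex \<Rightarrow> complex \<Rightarrow> complex \<Rightarrow> sconst" where
  "T g1 b12 b22 b13 b23 b33 = Tg 0 (-g1) g1 (-(5/2)*b12) b12 b22 b13 b23 b33"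

lemma Tsupp: assumes "a \<in> {1..8}" "b \<in> {1..8}" "h \<in> {1..8}" "T g1 b12 b22 b13 b23 b33 a b h \<noteq> 0"
  shows "(a = 1 \<and> h + 1 = b \<and> b \<ge> 3) \<or> (b = 1 \<and> h + 1 = a \<and> a \<ge> 3) \<or>
    (2 \<le> a \<and> 2 \<le> b \<and> h = 2 \<and> a + b \<ge> 11) \<or>
    ((a = 6 \<and> b = 7 \<or> a = 7 \<and> b = 6) \<and> h = 3 \<and> b12 \<noteq> 0) \<or>
    ((a = 8 \<or> b = 8) \<and> 2 \<le> h \<and> h < a \<and> h < b)"
  using assms unfolding in8
  by (elim disjE) (simp_all add: T_def Tg_def U_def cv_def)


definition JT where "JT g1 b12 b22 b13 b23 b33 a b d h =
  (\<Sum>j\<in>{1..8}. T g1 b12 b22 b13 b23 b33 b d j * T g1 b12 b22 b13 b23 b33 a j h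
     + T g1 b12 b22 b13 b23 b33 d a j * T g1 b12 b22 b13 b23 b33 b j h
     + T g1 b12 b22 b13 b23 b33 a b j * T g1 b12 b22 b13 b23 b33 d j h)"

lemma "JT g1 b12 b22 b13 b23 b33 6 7 8 2 = 0"
  by (simp add: JT_def sum8 sum8' T_def Tg_def U_def cv_def algebra_simps)
lemma "JT g1 b12 b22 b13 b23 b33 5 7 8 3 = 0"
  by (simp add: JT_def sum8 sum8' T_def Tg_def U_def cv_def algebra_simps)
lemma "JT g1 b12 b22 b13 b23 b33 1 7 8 5 = 0"
  by (simp add: JT_def sum8 sum8' T_def Tg_def U_def cv_def algebra_simps)

lemma JT_sorted: assumes "a \<in> {1..8}" "b \<in> {1..8}" "d \<in> {1..8}" "h \<in> {1..8}" "a < b" "b < d"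
  shows "JT g1 b12 b22 b13 b23 b33 a b d h = 0"
  using assms unfolding in8
  by (elim disjE) (simp_all add: JT_def sum8 sum8' T_def Tg_def U_def cv_def algebra_simps)

lemma Tg_anti: "Tg a1 a2 g1 g2 b12 b22 b13 b23 b33 a b h = - Tg a1 a2 g1 g2 b12 b22 b13 b23 b33 b a h"
  by (simp add: Tg_def)
lemma T_anti: "T g1 b12 b22 b13 b23 b33 a b h = - T g1 b12 b22 b13 b23 b33 b a h"
  unfolding T_def by (rule Tg_anti)
lemma T_diag: "T g1 b12 b22 b13 b23 b33 a a h = 0"
  by (simp add: T_def Tg_def)

lemma JT_cyc: "JT g1 b12 b22 b13 b23 b33 a b d h = JT g1 b12 b22 b13 b23 b33 b d a h"
  unfolding JT_def by (rule sum.cong) (simp_all add: add_ac)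

lemma JT_swap: "JT g1 b12 b22 b13 b23 b33 b a d h = - JT g1 b12 b22 b13 b23 b33 a b d h"
  unfolding JT_def sum_negf[symmetric]
  by (rule sum.cong) (simp_all add: T_anti[of g1 b12 b22 b13 b23 b33 b a] T_anti[of g1 b12 b22 b13 b23 b33 d b]
      T_anti[of g1 b12 b22 b13 b23 b33 d a] algebra_simps)

lemma JT_eq: "JT g1 b12 b22 b13 b23 b33 a a d h = 0"
  unfolding JT_def
  by (rule sum.neutral) (simp add: T_anti[of g1 b12 b22 b13 b23 b33 d a] T_diag)

lemma JT_all: assumes "a \<in> {1..8}" "b \<in> {1..8}" "d \<in> {1..8}" "h \<in> {1..8}"
  shows "JT g1 b12 b22 b13 b23 b33 a b d h = 0"
proof -
  let ?J = "\<lambda>a b d. JT g1 b12 b22 b13 b23 b33 a b d h"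
  have s: "\<And>a b d. a \<in> {1..8} \<Longrightarrow> b \<in> {1..8} \<Longrightarrow> d \<in> {1..8} \<Longrightarrow> a < b \<Longrightarrow> b < d \<Longrightarrow> ?J a b d = 0"
    using JT_sorted assms(4) by blast
  have e1: "?J a a d = 0" "?J a b b = 0" "?J a b a = 0" for a b d
    using JT_eq JT_cyc by metis+
  consider "a < b \<and> b < d" | "a < d \<and> d < b" | "b < a \<and> a < d" | "b < d \<and> d < a" | "d < a \<and> a < b"
    | "d < b \<and> b < a" | "a = b" | "b = d" | "a = d" by arith
  then show ?thesis
  proof cases
    case 1 then show ?thesis using s assms by blast
  next
    case 2 then show ?thesis using s[of a d b] assms JT_swap[of _ _ _ _ _ _ d b a] JT_cyc by (metis neg_equal_0_iff_equal)
  next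
    case 3 then show ?thesis using s[of b a d] assms JT_swap[of _ _ _ _ _ _ b a d] by (metis neg_equal_0_iff_equal)
  next
    case 4 then show ?thesis using s[of b d a] assms JT_cyc by metis
  next
    case 5 then show ?thesis using s[of d a b] assms JT_cyc by metis
  next
    case 6 then show ?thesis using s[of d b a] assms JT_swap[of _ _ _ _ _ _ a b d] JT_cyc by (metis neg_equal_0_iff_equal)
  qed (use e1 in auto)
qed

lemma sum_rot3: "(\<Sum>i\<in>X1. \<Sum>j\<in>X2. \<Sum>k\<in>X3. f i j k) = (\<Sum>j\<in>X2. \<Sum>k\<in>X3. \<Sum>i\<in>X1. f i j k)"
proof -
  have "(\<Sum>i\<in>X1. \<Sum>j\<in>X2. \<Sum>k\<in>X3. f i j k) = (\<Sum>j\<in>X2. \<Sum>i\<in>X1. \<Sum>k\<in>X3. f i j k)"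
    by (rule sum.swap)
  also have "\<dots> = (\<Sum>j\<in>X2. \<Sum>k\<in>X3. \<Sum>i\<in>X1. f i j k)"
    by (rule sum.cong[OF refl], rule sum.swap)
  finally show ?thesis .
qed

lemma lie_br_out: "h \<notin> {1..n} \<Longrightarrow> lie_br n c u v h = 0"
  by (auto simp: lie_br_def)

lemma br_br_expand: assumes "h \<in> {1..n}"
  shows "lie_br n c x (lie_br n c y z) h =
    (\<Sum>a\<in>{1..n}. \<Sum>a'\<in>{1..n}. \<Sum>b'\<in>{1..n}. x a * y a' * z b' * (\<Sum>b\<in>{1..n}. c a' b' b * c a b h))"
proof -
  have "lie_br n c x (lie_br n c y z) h =
     (\<Sum>a\<in>{1..n}. \<Sum>b\<in>{1..n}. x a * (\<Sum>a'\<in>{1..n}. \<Sum>b'\<in>{1..n}. y a' * z b' * c a' b' b) * c a b h)"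
    using assms by (auto simp: lie_br_def intro!: sum.cong)
  also have "\<dots> = (\<Sum>a\<in>{1..n}. \<Sum>b\<in>{1..n}. \<Sum>a'\<in>{1..n}. \<Sum>b'\<in>{1..n}. x a * y a' * z b' * (c a' b' b * c a b h))"
    by (simp add: sum_distrib_left sum_distrib_right mult_ac)
  also have "\<dots> = (\<Sum>a\<in>{1..n}. \<Sum>a'\<in>{1..n}. \<Sum>b'\<in>{1..n}. \<Sum>b\<in>{1..n}. x a * y a' * z b' * (c a' b' b * c a b h))"
  proof (rule sum.cong[OF refl])
    fix a
    show "(\<Sum>b\<in>{1..n}. \<Sum>a'\<in>{1..n}. \<Sum>b'\<in>{1..n}. x a * y a' * z b' * (c a' b' b * c a b h)) =
      (\<Sum>a'\<in>{1..n}. \<Sum>b'\<in>{1..n}. \<Sum>b\<in>{1..n}. x a * y a' * z b' * (c a' b' b * c a b h))"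
      by (rule sum_rot3)
  qed
  also have "\<dots> = (\<Sum>a\<in>{1..n}. \<Sum>a'\<in>{1..n}. \<Sum>b'\<in>{1..n}. x a * y a' * z b' * (\<Sum>b\<in>{1..n}. c a' b' b * c a b h))"
    by (simp add: sum_distrib_left)
  finally show ?thesis .
qed

lemma jacobi_from_basis:
  assumes J: "\<And>a b d h. a \<in> {1..n} \<Longrightarrow> b \<in> {1..n} \<Longrightarrow> d \<in> {1..n} \<Longrightarrow> h \<in> {1..n} \<Longrightarrow>
    (\<Sum>j\<in>{1..n}. c b d j * c a j h + c d a j * c b j h + c a b j * c d j h) = 0"
  shows "lie_br n c x (lie_br n c y z) + lie_br n c y (lie_br n c z x) + lie_br n c z (lie_br n c x y) = 0"
proof (rule ext)
  fix h
  show "(lie_br n c x (lie_br n c y z) + lie_br n c y (lie_br n c z x) + lie_br n c z (lie_br n c x y)) h = 0 h"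
  proof (cases "h \<in> {1..n}")
    case False then show ?thesis by (simp add: lie_br_out)
  next
    case True
    let ?I = "{1..n}"
    let ?K = "\<lambda>p q r. (\<Sum>b\<in>?I. c q r b * c p b h)"
    have t2: "(\<Sum>a'\<in>?I. \<Sum>b'\<in>?I. \<Sum>a\<in>?I. y a' * z b' * x a * ?K a' b' a)
        = (\<Sum>a\<in>?I. \<Sum>a'\<in>?I. \<Sum>b'\<in>?I. x a * y a' * z b' * ?K a' b' a)"
      using sum_rot3[of "\<lambda>a a' b'. x a * y a' * z b' * ?K a' b' a" ?I ?I ?I] by (simp add: mult_ac)
    have t3: "(\<Sum>b'\<in>?I. \<Sum>a\<in>?I. \<Sum>a'\<in>?I. z b' * x a * y a' * ?K b' a a')
        = (\<Sum>a\<in>?I. \<Sum>a'\<in>?I. \<Sum>b'\<in>?I. x a * y a' * z b' * ?K b' a a')"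
      using sum_rot3[of "\<lambda>b' a a'. x a * y a' * z b' * ?K b' a a'" ?I ?I ?I] by (simp add: mult_ac)
    have "(lie_br n c x (lie_br n c y z) + lie_br n c y (lie_br n c z x) + lie_br n c z (lie_br n c x y)) h
      = (\<Sum>a\<in>?I. \<Sum>a'\<in>?I. \<Sum>b'\<in>?I. x a * y a' * z b' * ?K a a' b')
      + (\<Sum>a'\<in>?I. \<Sum>b'\<in>?I. \<Sum>a\<in>?I. y a' * z b' * x a * ?K a' b' a)
      + (\<Sum>b'\<in>?I. \<Sum>a\<in>?I. \<Sum>a'\<in>?I. z b' * x a * y a' * ?K b' a a')"
      by (simp only: plus_fun_apply br_br_expand[OF True])
    also have "\<dots> = (\<Sum>a\<in>?I. \<Sum>a'\<in>?I. \<Sum>b'\<in>?I. x a * y a' * z b' * ?K a a' b')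
      + (\<Sum>a\<in>?I. \<Sum>a'\<in>?I. \<Sum>b'\<in>?I. x a * y a' * z b' * ?K a' b' a)
      + (\<Sum>a\<in>?I. \<Sum>a'\<in>?I. \<Sum>b'\<in>?I. x a * y a' * z b' * ?K b' a a')"
      by (simp only: t2 t3)
    also have "\<dots> = (\<Sum>a\<in>?I. \<Sum>a'\<in>?I. \<Sum>b'\<in>?I. x a * y a' * z b' * (?K a a' b' + ?K a' b' a + ?K b' a a'))"
      by (simp add: sum.distrib distrib_left)
    also have "\<dots> = 0"
      by (rule sum.neutral, rule ballI, rule sum.neutral, rule ballI, rule sum.neutral, rule ballI)
         (use J True in \<open>simp add: sum.distrib[symmetric] add_ac mult_ac\<close>)
    finally show ?thesis by simp
  qed
qed


lemma lie_br_Vn: "lie_br n c x y \<in> Vn n"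
  by (simp add: Vn_def lie_br_out)

lemma anti_sum: fixes c :: sconst and x y :: vect and I :: "nat set"
  assumes anti: "\<And>a b. c a b h = - c b a h"
  shows "(\<Sum>a\<in>I. \<Sum>b\<in>I. x a * y b * c a b h) = - (\<Sum>a\<in>I. \<Sum>b\<in>I. y a * x b * c a b h)"
proof -
  have "(\<Sum>a\<in>I. \<Sum>b\<in>I. x a * y b * c a b h) = (\<Sum>b\<in>I. \<Sum>a\<in>I. x a * y b * c a b h)"
    by (rule sum.swap)
  also have "\<dots> = (\<Sum>b\<in>I. \<Sum>a\<in>I. - (y b * x a * c b a h))"
  proof (intro sum.cong refl)
    fix a b show "x a * y b * c a b h = - (y b * x a * c b a h)" by (subst anti) simp
  qed
  finally show ?thesis by (simp add: sum_negf)
qed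

lemma lie_br_anti: fixes c :: sconst
  assumes anti: "\<And>a b h. c a b h = - c b a h"
  shows "lie_br n c x y = - lie_br n c y x"
proof (rule ext)
  fix h
  have "(\<Sum>a\<in>{1..n}. \<Sum>b\<in>{1..n}. x a * y b * c a b h) = - (\<Sum>a\<in>{1..n}. \<Sum>b\<in>{1..n}. y a * x b * c a b h)"
    by (rule anti_sum) (rule anti)
  then show "lie_br n c x y h = (- lie_br n c y x) h" by (simp add: lie_br_def)
qed

lemma lie_br_alt: fixes c :: sconst
  assumes anti: "\<And>a b h. c a b h = - c b a h"
  shows "lie_br n c x x = 0"
proof -
  have "lie_br n c x x = - lie_br n c x x" by (rule lie_br_anti[OF anti])
  then show ?thesis by (simp add: fun_eq_iff)
qed

abbreviation TT where "TT g1 b12 b22 b13 b23 b33 \<equiv> T g1 b12 b22 b13 b23 b33"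

lemma T_lie: "is_lie_algebra 8 (T g1 b12 b22 b13 b23 b33)"
  unfolding is_lie_algebra_def
proof (intro conjI ballI)
  fix x show "lie_br 8 (T g1 b12 b22 b13 b23 b33) x x = 0"
    by (rule lie_br_alt) (rule T_anti)
next
  fix x y z
  show "lie_br 8 (T g1 b12 b22 b13 b23 b33) x (lie_br 8 (T g1 b12 b22 b13 b23 b33) y z) +
          lie_br 8 (T g1 b12 b22 b13 b23 b33) y (lie_br 8 (T g1 b12 b22 b13 b23 b33) z x) +
          lie_br 8 (T g1 b12 b22 b13 b23 b33) z (lie_br 8 (T g1 b12 b22 b13 b23 b33) x y) = 0"
    by (rule jacobi_from_basis) (use JT_all in \<open>simp add: JT_def\<close>)
qed

lemma T_adapted: "adapted 8 (T g1 b12 b22 b13 b23 b33)"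
  unfolding adapted_def
proof (intro conjI allI impI)
  fix h :: nat assume h: "3 \<le> h \<and> h \<le> 8"
  show "lie_br 8 (T g1 b12 b22 b13 b23 b33) (ev 1) (ev h) = ev (h - 1)"
    using h by (intro ext) (auto simp: lie_br_ev_ev ev_apply T_def Tg_def U_def)
next
  fix h :: nat assume h: "1 \<le> h \<and> h \<le> 8"
  then have "h \<in> {1..8}" by simp
  then show "lie_br 8 (T g1 b12 b22 b13 b23 b33) (ev 2) (ev h) = 0"
    unfolding in8
    by (elim disjE; intro ext; simp add: lie_br_ev_ev T_def Tg_def U_def cv_def)
next
  fix h :: nat assume h: "2 \<le> h \<and> h \<le> 8"
  then have "h \<in> {1..8}" by simp
  then show "lie_br 8 (T g1 b12 b22 b13 b23 b33) (ev 3) (ev h) = 0"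
    using h unfolding in8
    by (elim disjE; intro ext; simp add: lie_br_ev_ev T_def Tg_def U_def cv_def)
qed


lemma Tv: "a \<in> {1..8} \<Longrightarrow> b \<in> {1..8} \<Longrightarrow>
  lie_br 8 (T g1 b12 b22 b13 b23 b33) (ev a) (ev b) = (\<lambda>h. if h \<in> {1..8} then T g1 b12 b22 b13 b23 b33 a b h else 0)"
  by (rule ext) (simp add: lie_br_ev_ev)

lemma T_law: "law458 (T g1 b12 b22 b13 b23 b33) 0 (-g1) g1 (-(5/2)*b12) b12 b22 b13 b23 b33"
  unfolding law458_def Let_def
proof (intro conjI allI impI)
  fix h :: nat assume h: "3 \<le> h \<and> h \<le> 8"
  show "lie_br 8 (T g1 b12 b22 b13 b23 b33) (ev 1) (ev h) = ev (h - 1)"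
    using h by (intro ext) (auto simp: lie_br_ev_ev ev_apply T_def Tg_def U_def)
next
  fix a b :: nat assume ab: "2 \<le> a \<and> a < b \<and> b \<le> 8 \<and>
        (a, b) \<notin> {(4, 6), (5, 6), (4, 7), (4, 8), (5, 7), (6, 7), (5, 8), (6, 8), (7, 8)}"
  then have "a \<in> {1..8}" "b \<in> {1..8}" by auto
  then show "lie_br 8 (T g1 b12 b22 b13 b23 b33) (ev a) (ev b) = 0"
    using ab unfolding in8
    by (elim disjE; intro ext; simp add: lie_br_ev_ev T_def Tg_def U_def cv_def)
qed (rule fun_eq8, (drule upto8, elim disjE; simp add: lie_br_ev_ev law_rec_apply T_def Tg_def U_def cv_def fscale_apply ev_apply), simp add: lie_br_out law_rec_apply fscale_apply ev_apply)+


lemma model_1: "model n a b (Suc 0) = 0"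
  by (auto simp: model_def)

lemma model_nz: "model n a b h \<noteq> 0 \<Longrightarrow> a = 1 \<or> b = 1"
  by (simp add: model_def split: if_splits)

lemma lie_model_1: "lie_br n (model n) p q (Suc 0) = 0"
  by (simp add: lie_br_def model_1)

lemma model_br2: "lie_br n (model n) (lie_br n (model n) p q) (lie_br n (model n) r s) = 0"
proof (rule ext)
  fix h
  define w where "w = lie_br n (model n) p q"
  define w' where "w' = lie_br n (model n) r s"
  have w1: "w (Suc 0) = 0" "w' (Suc 0) = 0" unfolding w_def w'_def by (rule lie_model_1)+
  have "\<And>a b. w a * w' b * model n a b h = 0"
  proof -
    fix a b
    show "w a * w' b * model n a b h = 0"
    proof (cases "model n a b h = 0")
      case False then have "a = 1 \<or> b = 1" by (rule model_nz)
      then show ?thesis using w1 by auto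
    qed simp
  qed
  then have "lie_br n (model n) w w' h = 0" by (simp add: lie_br_def del: mult_eq_0_iff)
  then show "lie_br n (model n) (lie_br n (model n) p q) (lie_br n (model n) r s) h = 0 h"
    by (simp add: w_def w'_def)
qed

context fixes g1 b12 b22 b13 b23 b33 :: complex assumes g1: "g1 \<noteq> 0"
begin

lemma T48_3: "lie_br 8 (T g1 b12 b22 b13 b23 b33) (ev 4) (ev 8) 3 = g1"
  by (simp add: lie_br_ev_ev T_def Tg_def U_def cv_def)
lemma T56_2: "lie_br 8 (T g1 b12 b22 b13 b23 b33) (ev 5) (ev 6) 2 = - g1"
  by (simp add: lie_br_ev_ev T_def Tg_def U_def cv_def)
lemma T45: "lie_br 8 (T g1 b12 b22 b13 b23 b33) (ev 4) (ev 5) = 0"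
  by (rule ext) (simp add: lie_br_ev_ev T_def Tg_def U_def cv_def)

lemma T_z1: "z1 8 (T g1 b12 b22 b13 b23 b33) = 4"
  unfolding z1_def
proof (rule Least_equality)
  show "4 \<le> (4::nat) \<and> lie_br 8 (T g1 b12 b22 b13 b23 b33) (ev 4) (ev 8) \<noteq> 0"
    using T48_3 g1 by (intro conjI) (simp, metis zero_fun_apply)
qed simp

lemma T_z2: "z2 8 (T g1 b12 b22 b13 b23 b33) = 5"
  unfolding z2_def
proof (rule Least_equality)
  show "4 \<le> (5::nat) \<and> lie_br 8 (T g1 b12 b22 b13 b23 b33) (ev 5) (ev (5 + 1)) \<noteq> 0"
  proof -
    have "lie_br 8 (T g1 b12 b22 b13 b23 b33) (ev 5) (ev 6) \<noteq> 0"
      using T56_2 g1 by (metis zero_fun_apply neg_equal_0_iff_equal)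
    then show ?thesis by simp
  qed
next
  fix y :: nat assume "4 \<le> y \<and> lie_br 8 (T g1 b12 b22 b13 b23 b33) (ev y) (ev (y + 1)) \<noteq> 0"
  then show "5 \<le> y" using T45 by (cases "y = 4") auto
qed

lemma T_e1: "3 \<le> h \<Longrightarrow> h \<le> 8 \<Longrightarrow> lie_br 8 (T g1 b12 b22 b13 b23 b33) (ev 1) (ev h) = ev (h - 1)"
  using T_adapted unfolding adapted_def by blast

lemma T_nonmodel: "non_model 8 (T g1 b12 b22 b13 b23 b33)"
  unfolding non_model_def lie_iso_def
proof
  let ?c = "T g1 b12 b22 b13 b23 b33"
  assume "\<exists>f. bij_betw f (Vn 8) (Vn 8) \<and>
        (\<forall>x\<in>Vn 8. \<forall>y\<in>Vn 8. f (x + y) = f x + f y) \<and>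
        (\<forall>x\<in>Vn 8. \<forall>a. f (fscale a x) = fscale a (f x)) \<and>
        (\<forall>x\<in>Vn 8. \<forall>y\<in>Vn 8. f (lie_br 8 ?c x y) = lie_br 8 (model 8) (f x) (f y))"
  then obtain f where bij: "bij_betw f (Vn 8) (Vn 8)"
    and add: "\<forall>x\<in>Vn 8. \<forall>y\<in>Vn 8. f (x + y) = f x + f y"
    and br: "\<forall>x\<in>Vn 8. \<forall>y\<in>Vn 8. f (lie_br 8 ?c x y) = lie_br 8 (model 8) (f x) (f y)" by blast
  have V: "\<And>k. k \<in> {1..8} \<Longrightarrow> ev k \<in> Vn 8" by (rule ev_Vn)
  have z: "0 \<in> Vn 8" by (simp add: Vn_def)
  have f0: "f 0 = 0" using add z by (metis add.right_neutral add_left_imp_eq)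
  have e5: "ev 5 = lie_br 8 ?c (ev 1) (ev 6)" using T_e1[of 6] by simp
  have e6: "ev 6 = lie_br 8 ?c (ev 1) (ev 7)" using T_e1[of 7] by simp
  have "f (lie_br 8 ?c (ev 5) (ev 6)) = lie_br 8 (model 8) (f (ev 5)) (f (ev 6))"
    using br V[of 5] V[of 6] by simp
  also have "\<dots> = lie_br 8 (model 8) (lie_br 8 (model 8) (f (ev 1)) (f (ev 6))) (lie_br 8 (model 8) (f (ev 1)) (f (ev 7)))"
  proof -
    have A: "f (lie_br 8 ?c (ev 1) (ev 6)) = lie_br 8 (model 8) (f (ev 1)) (f (ev 6))"
      using br V[of 1] V[of 6] by simp
    have B: "f (lie_br 8 ?c (ev 1) (ev 7)) = lie_br 8 (model 8) (f (ev 1)) (f (ev 7))"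
      using br V[of 1] V[of 7] by simp
    show ?thesis using A B e5 e6 by simp
  qed
  also have "\<dots> = 0" by (rule model_br2)
  finally have "f (lie_br 8 ?c (ev 5) (ev 6)) = f 0" using f0 by simp
  then have "lie_br 8 ?c (ev 5) (ev 6) = 0"
    using bij lie_br_Vn z unfolding bij_betw_def inj_on_def by blast
  then show False using T56_2 g1 by (metis neg_equal_0_iff_equal zero_fun_apply)
qed

end

lemma gen_upper: assumes "finite R"
  and H: "\<And>a b h. a \<in> A \<Longrightarrow> b \<in> BB \<Longrightarrow> h \<in> {1..n} \<Longrightarrow> h \<notin> R \<Longrightarrow> c a b h = 0"
  and AB: "A \<subseteq> {1..n}" "BB \<subseteq> {1..n}"
  shows "fv.span {lie_br n c x y | x y. x \<in> ev ` A \<and> y \<in> ev ` BB} \<subseteq> fv.span (ev ` R)"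
proof (rule fv.span_minimal)
  show "fv.subspace (fv.span (ev ` R))" by (rule fv.subspace_span)
  show "{lie_br n c x y | x y. x \<in> ev ` A \<and> y \<in> ev ` BB} \<subseteq> fv.span (ev ` R)"
  proof
    fix v assume "v \<in> {lie_br n c x y | x y. x \<in> ev ` A \<and> y \<in> ev ` BB}"
    then obtain a b where ab: "a \<in> A" "b \<in> BB" "v = lie_br n c (ev a) (ev b)" by blast
    have "\<forall>h. h \<notin> R \<longrightarrow> v h = 0"
      using ab AB H by (auto simp: lie_br_ev_ev subset_iff)
    then show "v \<in> fv.span (ev ` R)" using span_ev[OF assms(1)] by simp
  qed
qed

lemma gen_eq: assumes "finite R"
  and H: "\<And>a b h. a \<in> A \<Longrightarrow> b \<in> BB \<Longrightarrow> h \<in> {1..n} \<Longrightarrow> h \<notin> R \<Longrightarrow> c a b h = 0"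
  and AB: "A \<subseteq> {1..n}" "BB \<subseteq> {1..n}"
  and L: "\<And>r. r \<in> R \<Longrightarrow> ev r \<in> fv.span {lie_br n c x y | x y. x \<in> ev ` A \<and> y \<in> ev ` BB}"
  shows "fv.span {lie_br n c x y | x y. x \<in> ev ` A \<and> y \<in> ev ` BB} = fv.span (ev ` R)"
proof
  show "fv.span {lie_br n c x y | x y. x \<in> ev ` A \<and> y \<in> ev ` BB} \<subseteq> fv.span (ev ` R)"
    by (rule gen_upper[OF assms(1-4)])
  show "fv.span (ev ` R) \<subseteq> fv.span {lie_br n c x y | x y. x \<in> ev ` A \<and> y \<in> ev ` BB}"
    by (rule fv.span_minimal) (use L in auto)
qed

lemma gen_in: "a \<in> A \<Longrightarrow> b \<in> BB \<Longrightarrow> lie_br n c (ev a) (ev b) = fscale s (ev r) \<Longrightarrow> s \<noteq> 0 \<Longrightarrow>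
   ev r \<in> fv.span {lie_br n c x y | x y. x \<in> ev ` A \<and> y \<in> ev ` BB}"
proof -
  assume a: "a \<in> A" "b \<in> BB" "lie_br n c (ev a) (ev b) = fscale s (ev r)" "s \<noteq> 0"
  then have "fscale s (ev r) \<in> fv.span {lie_br n c x y | x y. x \<in> ev ` A \<and> y \<in> ev ` BB}"
    by (intro fv.span_base) force
  then have "fscale (1/s) (fscale s (ev r)) \<in> fv.span {lie_br n c x y | x y. x \<in> ev ` A \<and> y \<in> ev ` BB}"
    by (rule fv.span_scale)
  then show ?thesis using a(4) by (simp add: fscale_def)
qed

lemma brs_sym1: fixes c :: sconst assumes anti: "\<And>a b h. c a b h = - c b a h"
  shows "{lie_br n c x y | x y. x \<in> X \<and> y \<in> Y} \<subseteq> fv.span {lie_br n c x y | x y. x \<in> Y \<and> y \<in> X}"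
proof
  fix v assume "v \<in> {lie_br n c x y | x y. x \<in> X \<and> y \<in> Y}"
  then obtain x y where xy: "x \<in> X" "y \<in> Y" "v = lie_br n c x y" by blast
  have v: "v = - lie_br n c y x" unfolding xy(3) by (rule lie_br_anti[OF anti])
  have "lie_br n c y x \<in> {lie_br n c x y | x y. x \<in> Y \<and> y \<in> X}" using xy by blast
  then show "v \<in> fv.span {lie_br n c x y | x y. x \<in> Y \<and> y \<in> X}"
    unfolding v by (intro fv.span_neg fv.span_base)
qed

lemma brs_sym: fixes c :: sconst assumes anti: "\<And>a b h. c a b h = - c b a h"
  shows "brs n c X Y = brs n c Y X"
proof -
  have "fv.span {lie_br n c x y | x y. x \<in> X \<and> y \<in> Y} = fv.span {lie_br n c x y | x y. x \<in> Y \<and> y \<in> X}"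
    by (rule iffD2[OF fv.span_eq], rule conjI, rule brs_sym1[OF anti], rule brs_sym1[OF anti])
  then show ?thesis by (simp add: brs_def)
qed

definition S :: "nat \<Rightarrow> nat set" where "S k = (if k \<le> 1 then {1..8} else {2..9-k})"

context fixes g1 b12 b22 b13 b23 b33 :: complex
begin

abbreviation "TC \<equiv> T g1 b12 b22 b13 b23 b33"

lemma Tr1: "2 \<le> r \<Longrightarrow> r \<le> 7 \<Longrightarrow> lie_br 8 TC (ev (r+1)) (ev 1) = fscale (-1) (ev r)"
  by (rule ext) (auto simp: lie_br_ev_ev T_def Tg_def U_def fscale_apply ev_apply)

lemma lcs_T: "lcs 8 TC k = fv.span (ev ` S k)"
proof (induction k rule: nat_less_induct)
  case (1 k)
  consider "k = 0" | "k = 1" | m where "k = Suc (Suc m)" by (metis One_nat_def not0_implies_Suc)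
  then show ?case
  proof cases
    case 3
    have IH: "lcs 8 TC (Suc m) = fv.span (ev ` S (Suc m))" using 1 3 by simp
    have "lcs 8 TC k = brs 8 TC (fv.span (ev ` S (Suc m))) (fv.span (ev ` {1..8}))"
      using 3 IH by (simp add: Vn_span)
    also have "\<dots> = fv.span {lie_br 8 TC x y | x y. x \<in> ev ` S (Suc m) \<and> y \<in> ev ` {1..8}}"
      by (rule brs_span)
    also have "\<dots> = fv.span (ev ` S k)"
    proof (rule gen_eq)
      show "finite (S k)" by (simp add: S_def)
      show "S (Suc m) \<subseteq> {1..8}" "{1..8} \<subseteq> {1..8::nat}" by (auto simp: S_def)
      fix a b h assume ab: "a \<in> S (Suc m)" "b \<in> {1..8::nat}" "h \<in> {1..8::nat}" "h \<notin> S k"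
      show "TC a b h = 0"
      proof (rule ccontr)
        assume nz: "TC a b h \<noteq> 0"
        have a8: "a \<in> {1..8}" using ab(1) by (auto simp: S_def split: if_splits)
        note D = Tsupp[OF a8 ab(2) ab(3) nz]
        have Sa: "(m = 0 \<and> 1 \<le> a \<and> a \<le> 8) \<or> (m \<noteq> 0 \<and> 2 \<le> a \<and> a \<le> 8 - m)"
          using ab(1) by (cases "m = 0") (auto simp: S_def)
        have Sh: "\<not> (2 \<le> h \<and> h \<le> 7 - m)" using ab(4) 3 by (simp add: S_def)
        show False using D Sa Sh ab(2,3) by auto
      qed
    next
      fix r assume r: "r \<in> S k"
      then have r2: "2 \<le> r" "r \<le> 7" using 3 by (auto simp: S_def)
      show "ev r \<in> fv.span {lie_br 8 TC x y | x y. x \<in> ev ` S (Suc m) \<and> y \<in> ev ` {1..8}}"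
        by (rule gen_in[OF _ _ Tr1[OF r2]]) (use r 3 in \<open>auto simp: S_def\<close>)
    qed
    finally show ?thesis .
  qed (auto simp: S_def Vn_span)
qed

end

context fixes g1 b12 b22 b13 b23 b33 :: complex
begin

definition Rk :: "nat \<Rightarrow> nat \<Rightarrow> nat set" where
  "Rk k l = (if 8 \<le> k + l then {} else if 6 \<le> k + l then {2} else if b12 = 0 then {2} else {2,3})"

lemma BT74: "lie_br 8 (TC g1 b12 b22 b13 b23 b33) (ev 7) (ev 4) = fscale (-g1) (ev 2)"
  by (rule fun_eq8, (drule upto8, elim disjE; simp add: lie_br_ev_ev T_def Tg_def U_def cv_def fscale_apply ev_apply), simp add: lie_br_out fscale_apply ev_apply)
lemma BT65: "lie_br 8 (TC g1 b12 b22 b13 b23 b33) (ev 6) (ev 5) = fscale g1 (ev 2)"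
  by (rule fun_eq8, (drule upto8, elim disjE; simp add: lie_br_ev_ev T_def Tg_def U_def cv_def fscale_apply ev_apply), simp add: lie_br_out fscale_apply ev_apply)
lemma BT56: "lie_br 8 (TC g1 b12 b22 b13 b23 b33) (ev 5) (ev 6) = fscale (-g1) (ev 2)"
  by (rule fun_eq8, (drule upto8, elim disjE; simp add: lie_br_ev_ev T_def Tg_def U_def cv_def fscale_apply ev_apply), simp add: lie_br_out fscale_apply ev_apply)
lemma BT47: "lie_br 8 (TC g1 b12 b22 b13 b23 b33) (ev 4) (ev 7) = fscale g1 (ev 2)"
  by (rule fun_eq8, (drule upto8, elim disjE; simp add: lie_br_ev_ev T_def Tg_def U_def cv_def fscale_apply ev_apply), simp add: lie_br_out fscale_apply ev_apply)
lemma BT67: "lie_br 8 (TC g1 b12 b22 b13 b23 b33) (ev 6) (ev 7) = fscale b22 (ev 2) + fscale b12 (ev 3)"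
  by (rule fun_eq8, (drule upto8, elim disjE; simp add: lie_br_ev_ev T_def Tg_def U_def cv_def fscale_apply ev_apply), simp add: lie_br_out fscale_apply ev_apply)
lemma BT76: "lie_br 8 (TC g1 b12 b22 b13 b23 b33) (ev 7) (ev 6) = - lie_br 8 (TC g1 b12 b22 b13 b23 b33) (ev 6) (ev 7)"
  by (rule lie_br_anti) (rule T_anti)

lemma Rk2: "k + l \<le> 7 \<Longrightarrow> 2 \<in> Rk k l" by (simp add: Rk_def)
lemma Rk3: "k + l \<le> 5 \<Longrightarrow> b12 \<noteq> 0 \<Longrightarrow> 3 \<in> Rk k l" by (simp add: Rk_def)

lemma brs_T: assumes g1: "g1 \<noteq> 0" and kl: "2 \<le> k" "2 \<le> l"
  shows "brs 8 (TC g1 b12 b22 b13 b23 b33) (lcs 8 (TC g1 b12 b22 b13 b23 b33) k) (lcs 8 (TC g1 b12 b22 b13 b23 b33) l)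
     = fv.span (ev ` Rk k l)"
proof -
  let ?c = "TC g1 b12 b22 b13 b23 b33"
  let ?G = "{lie_br 8 ?c x y | x y. x \<in> ev ` {2..9-k} \<and> y \<in> ev ` {2..9-l}}"
  have Sk: "S k = {2..9-k}" "S l = {2..9-l}" using kl by (auto simp: S_def)
  have "brs 8 ?c (lcs 8 ?c k) (lcs 8 ?c l) = fv.span ?G"
    unfolding lcs_T Sk by (rule brs_span)
  also have "\<dots> = fv.span (ev ` Rk k l)"
  proof (rule gen_eq)
    show "finite (Rk k l)" by (simp add: Rk_def)
    show "{2..9-k} \<subseteq> {1..8::nat}" "{2..9-l} \<subseteq> {1..8::nat}" using kl by auto
    fix a b h assume ab: "a \<in> {2..9-k}" "b \<in> {2..9-l}" "h \<in> {1..8::nat}" "h \<notin> Rk k l"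
    show "?c a b h = 0"
    proof (rule ccontr)
      assume nz: "?c a b h \<noteq> 0"
      have a8: "a \<in> {1..8}" "b \<in> {1..8}" using ab kl by auto
      note D = Tsupp[OF a8 ab(3) nz]
      have sab: "a + b + k + l \<le> 18" "a \<le> 7" "b \<le> 7" "2 \<le> a" "2 \<le> b" using ab kl by auto
      from D show False
      proof (elim disjE)
        assume "2 \<le> a \<and> 2 \<le> b \<and> h = 2 \<and> 11 \<le> a + b"
        then have "k + l \<le> 7" "h = 2" using sab by auto
        then show False using Rk2 ab(4) by auto
      next
        assume "(a = 6 \<and> b = 7 \<or> a = 7 \<and> b = 6) \<and> h = 3 \<and> b12 \<noteq> 0"
        then have "k + l \<le> 5" "h = 3" "b12 \<noteq> 0" using sab by auto
        then show False using Rk3 ab(4) by auto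
      qed (use sab in auto)
    qed
  next
    have e2: "ev 2 \<in> fv.span ?G" if kl7: "k + l \<le> 7"
    proof -
      consider "k = 2" | "k = 3" | "k = 4" | "k = 5" using kl7 kl by arith
      then show ?thesis
      proof cases
        case 1 then show ?thesis using kl7 g1 by (intro gen_in[OF _ _ BT74]) auto
      next
        case 2 then show ?thesis using kl7 g1 by (intro gen_in[OF _ _ BT65]) auto
      next
        case 3 then show ?thesis using kl7 g1 by (intro gen_in[OF _ _ BT56]) auto
      next
        case 4 then show ?thesis using kl7 g1 by (intro gen_in[OF _ _ BT47]) auto
      qed
    qed
    fix r assume r: "r \<in> Rk k l"
    have kl7: "k + l \<le> 7" using r unfolding Rk_def by (cases "8 \<le> k + l") auto
    show "ev r \<in> fv.span ?G"
    proof (cases "r = 2")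
      case True then show ?thesis using e2[OF kl7] by simp
    next
      case False
      have r3: "r = 3" "k + l \<le> 5" "b12 \<noteq> 0" using r False unfolding Rk_def
        by (cases "8 \<le> k + l"; cases "6 \<le> k + l"; cases "b12 = 0"; simp)+
      have "lie_br 8 ?c (ev 6) (ev 7) \<in> fv.span ?G"
      proof (cases "l = 2")
        case True
        have "ev 6 \<in> ev ` {2..9-k}" "ev 7 \<in> ev ` {2..9-l}" using r3 kl True by auto
        then have "lie_br 8 ?c (ev 6) (ev 7) \<in> ?G" by blast
        then show ?thesis by (rule fv.span_base)
      next
        case False
        have "ev 7 \<in> ev ` {2..9-k}" "ev 6 \<in> ev ` {2..9-l}" using r3 kl False by auto
        then have "lie_br 8 ?c (ev 7) (ev 6) \<in> ?G" by blast
        then have "- lie_br 8 ?c (ev 7) (ev 6) \<in> fv.span ?G" by (intro fv.span_neg fv.span_base)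
        then show ?thesis by (simp add: BT76)
      qed
      then have s1: "fscale b22 (ev 2) + fscale b12 (ev 3) \<in> fv.span ?G" by (simp add: BT67)
      have s2: "fscale b22 (ev 2) \<in> fv.span ?G" using e2 r3 by (intro fv.span_scale) simp
      have "(fscale b22 (ev 2) + fscale b12 (ev 3)) - fscale b22 (ev 2) \<in> fv.span ?G"
        by (rule fv.span_diff[OF s1 s2])
      then have "fscale b12 (ev 3) \<in> fv.span ?G" by simp
      then have "fscale (1/b12) (fscale b12 (ev 3)) \<in> fv.span ?G" by (rule fv.span_scale)
      then show ?thesis using r3 by (simp add: fscale_def)
    qed
  qed
  finally show ?thesis .
qed

end

context fixes g1 b12 b22 b13 b23 b33 :: complex
begin

lemma lcs_Suc_T: "1 \<le> k \<Longrightarrow> brs 8 (TC g1 b12 b22 b13 b23 b33) (lcs 8 (TC g1 b12 b22 b13 b23 b33) k) (Vn 8)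
   = lcs 8 (TC g1 b12 b22 b13 b23 b33) (Suc k)"
  by (cases k) auto

lemma lcs1_T: "lcs 8 (TC g1 b12 b22 b13 b23 b33) (Suc 0) = Vn 8" by simp

lemma dim_ev: "finite R \<Longrightarrow> fv.dim (ev ` R) = card R"
  using dim_span_ev by (simp add: fv.dim_span)

lemma dim_lcs_T: "fv.dim (lcs 8 (TC g1 b12 b22 b13 b23 b33) k) = card (S k)"
  by (simp add: lcs_T dim_span_ev dim_ev S_def)

lemma cardS: "1 \<le> k \<Longrightarrow> card (S (Suc k)) = 7 - k"
  by (simp add: S_def)

lemma T_fil: "filiform 8 (TC g1 b12 b22 b13 b23 b33)"
  unfolding filiform_def
proof (intro conjI allI impI)
  show "fv.dim (Vn 8) = 8" by (simp add: Vn_span dim_span_ev dim_ev)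
  fix k :: nat assume "2 \<le> k \<and> k \<le> 8"
  then show "fv.dim (lcs 8 (TC g1 b12 b22 b13 b23 b33) k) = 8 - k"
    by (simp add: dim_lcs_T S_def)
qed simp

lemma HP_T: assumes g1: "g1 \<noteq> 0"
  shows "HP 8 (TC g1 b12 b22 b13 b23 b33) k l - HP0 8 k l =
    (if 2 \<le> k \<and> 2 \<le> l then (if k + l \<le> 5 then (if b12 \<noteq> 0 then 2 else 1) else if k + l \<le> 7 then 1 else 0) else 0)"
proof -
  let ?c = "TC g1 b12 b22 b13 b23 b33"
  have anti: "\<And>a b h. ?c a b h = - ?c b a h" by (rule T_anti)
  consider "k = 0 \<or> l = 0" | "1 \<le> k \<and> l = 1" | "k = 1 \<and> 2 \<le> l" | "2 \<le> k \<and> 2 \<le> l" by arith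
  then show ?thesis
  proof cases
    case 1 then show ?thesis by (auto simp: HP_def HP0_def)
  next
    case 2
    then have "HP 8 ?c k l = int (7 - k)"
      by (simp add: HP_def lcs1_T lcs_Suc_T dim_lcs_T cardS del: lcs.simps)
    then show ?thesis using 2 by (auto simp: HP0_def)
  next
    case 3
    then have "brs 8 ?c (lcs 8 ?c k) (lcs 8 ?c l) = lcs 8 ?c (Suc l)"
      using brs_sym[OF anti, where n=8 and X="Vn 8" and Y="lcs 8 ?c l"] lcs_Suc_T[of l] by simp
    then have "HP 8 ?c k l = int (7 - l)"
      using 3 by (simp add: HP_def dim_lcs_T cardS del: lcs.simps)
    then show ?thesis using 3 by (auto simp: HP0_def)
  next
    case 4
    then have "HP 8 ?c k l = int (card (Rk b12 k l))"
      by (simp add: HP_def brs_T[OF g1] dim_span_ev dim_ev Rk_def del: lcs.simps)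
    then show ?thesis using 4 by (auto simp: HP0_def Rk_def)
  qed
qed

end

lemma cv0: "\<forall>x\<in>set xs. x = 0 \<Longrightarrow> cv xs h = 0"
  by (auto simp: cv_def)

lemma Tg0_model: assumes "a \<in> {1..8}" "b \<in> {1..8}" "h \<in> {1..8}"
  shows "Tg 0 0 0 0 0 0 0 0 0 a b h = model 8 a b h"
  using assms unfolding in8
  by (elim disjE) (simp_all add: Tg_def U_def model_def cv_def)

lemma iso_model: assumes "\<And>a b h. a \<in> {1..8} \<Longrightarrow> b \<in> {1..8} \<Longrightarrow> h \<in> {1..8} \<Longrightarrow> c a b h = model 8 a b h"
  shows "lie_iso 8 c (model 8)"
proof -
  have e: "lie_br 8 c = lie_br 8 (model 8)" by (rule lie_br_cong) (rule assms)
  show ?thesis unfolding lie_iso_def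
    by (rule exI[of _ id]) (simp add: e bij_betw_id)
qed

context
  fixes c :: sconst and a1 a2 g1 g2 b12 b22 b13 b23 b33 :: complex
  assumes lie: "is_lie_algebra 8 c" and adp: "adapted 8 c"
    and law: "law458 c a1 a2 g1 g2 b12 b22 b13 b23 b33"
    and nm: "non_model 8 c" and tz2: "z2 8 c = 5"
begin

lemma cfun0: "cv xs = 0 \<Longrightarrow> cv xs h = 0" by simp

lemma c_g1: "g1 \<noteq> 0"
proof
  assume g0: "g1 = 0"
  have a1: "a1 = 0" by (rule c_a1[OF lie adp law])
  have a2: "a2 = 0" using c_a2[OF lie adp law] g0 by simp
  let ?P = "\<lambda>k. 4 \<le> k \<and> lie_br 8 c (ev k) (ev (k + 1)) \<noteq> 0"
  have B56: "lie_br 8 c (ev 5) (ev 6) = 0"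
    using L56[OF lie adp law] a1 a2 by (simp add: fun_eq_iff cv0)
  have noP: "\<not> (\<exists>k. ?P k)"
  proof
    assume "\<exists>k. ?P k"
    then have "?P (LEAST k. ?P k)" by (rule LeastI_ex)
    then have "?P 5" using tz2 by (simp add: z2_def)
    then show False using B56 by simp
  qed
  have "\<not> ?P 6" "\<not> ?P 7" using noP by blast+
  then have B67: "lie_br 8 c (ev 6) (ev 7) = 0" and B78: "lie_br 8 c (ev 7) (ev 8) = 0" by simp_all
  have v67: "cv [b22, b12, g1+a2, 2*a1] = 0" using B67 L67[OF lie adp law] by simp
  have v78: "cv [b33, b23, b13+b22, g2+2*b12, 3*g1+2*a2, 5*a1] = 0" using B78 L78[OF lie adp law] by simp
  have b22: "b22 = 0" using cfun0[OF v67, of 2] by (simp add: cv_def)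
  have b12: "b12 = 0" using cfun0[OF v67, of 3] by (simp add: cv_def)
  have b33: "b33 = 0" using cfun0[OF v78, of 2] by (simp add: cv_def)
  have b23: "b23 = 0" using cfun0[OF v78, of 3] by (simp add: cv_def)
  have b13: "b13 = 0" using cfun0[OF v78, of 4] b22 by (simp add: cv_def)
  have g2: "g2 = 0" using cfun0[OF v78, of 5] b12 by (simp add: cv_def)
  have "lie_iso 8 c (model 8)"
  proof (rule iso_model)
    fix a b h :: nat assume r: "a \<in> {1..8}" "b \<in> {1..8}" "h \<in> {1..8}"
    show "c a b h = model 8 a b h"
      using tab[OF lie adp law r] a1 a2 g0 g2 b12 b22 b13 b23 b33 Tg0_model[OF r] by simp
  qed
  then show False using nm by (simp add: non_model_def)
qed

lemma c_g2': "g2 = - (5/2) * b12"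
proof -
  have "2 * g2 + 5 * b12 = 0" using c_g2[OF lie adp law] c_g1 by simp
  have "g2 = ((2 * g2 + 5 * b12) - 5 * b12) / 2" by simp
  also have "\<dots> = (0 - 5 * b12) / 2" by (simp only: \<open>2 * g2 + 5 * b12 = 0\<close>)
  also have "\<dots> = - (5/2) * b12" by simp
  finally show ?thesis .
qed

lemma c_T: "lie_br 8 c = lie_br 8 (T g1 b12 b22 b13 b23 b33)"
proof (rule lie_br_cong)
  fix a b h :: nat assume r: "a \<in> {1..8}" "b \<in> {1..8}" "h \<in> {1..8}"
  show "c a b h = T g1 b12 b22 b13 b23 b33 a b h"
  proof -
    have "c a b h = Tg a1 a2 g1 g2 b12 b22 b13 b23 b33 a b h" by (rule tab[OF lie adp law r])
    also have "\<dots> = Tg 0 (-g1) g1 (- (5/2) * b12) b12 b22 b13 b23 b33 a b h"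
      using c_a1[OF lie adp law] c_a2[OF lie adp law] c_g2' by simp
    finally show ?thesis by (simp only: T_def)
  qed
qed

end

lemma fscale0[simp]: "fscale 0 v = 0" by (simp add: fscale_def fun_eq_iff)
lemma fscale1[simp]: "fscale 1 v = v" by (simp add: fscale_def fun_eq_iff)

lemma T_fil458: assumes "g1 \<noteq> 0"
  shows "fil458 (T g1 b12 b22 b13 b23 b33) 0 (-g1) g1 (-(5/2)*b12) b12 b22 b13 b23 b33"
  unfolding fil458_def using assms T_law[of g1 b12 b22 b13 b23 b33]
  by (simp add: T_lie T_fil T_adapted T_nonmodel T_z1 T_z2)

lemma V2: "fv.span (ev ` Rk b12 2 2) = fv.span {ev 2, fscale b12 (ev 3)}"
proof (cases "b12 = 0")
  case True
  then show ?thesis by (simp add: Rk_def insert_commute)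
next
  case False
  then have R: "ev ` Rk b12 2 2 = {ev 2, ev 3}" by (simp add: Rk_def)
  have "fscale (1/b12) (fscale b12 (ev 3)) = ev 3" using False by (simp add: fscale_def)
  then have "ev 3 \<in> fv.span {ev 2, fscale b12 (ev 3)}"
    by (metis fv.span_base fv.span_scale insertCI)
  moreover have "fscale b12 (ev 3) \<in> fv.span {ev 2, ev 3}"
    by (intro fv.span_scale fv.span_base) simp
  ultimately show ?thesis unfolding R fv.span_eq
    by (auto intro: fv.span_base)
qed

lemma Y2: assumes "p \<in> Vn 8" "q \<in> Vn 8" "r \<in> Vn 8" "s \<in> Vn 8"
  shows "lie_br 8 (T 1 0 0 0 0 0) (lie_br 8 (T 1 0 0 0 0 0) p q) (lie_br 8 (T 1 0 0 0 0 0) r s) \<in> fv.span {ev 2}"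
proof -
  let ?Y = "T 1 0 0 0 0 0"
  have L2: "lcs 8 ?Y 2 = brs 8 ?Y (Vn 8) (Vn 8)" by (simp add: numeral_2_eq_2)
  have u: "lie_br 8 ?Y p q \<in> lcs 8 ?Y 2" "lie_br 8 ?Y r s \<in> lcs 8 ?Y 2"
    unfolding L2 brs_def using assms by (blast intro: fv.span_base)+
  have "lie_br 8 ?Y (lie_br 8 ?Y p q) (lie_br 8 ?Y r s) \<in> brs 8 ?Y (lcs 8 ?Y 2) (lcs 8 ?Y 2)"
    unfolding brs_def using u by (blast intro: fv.span_base)
  also have "\<dots> = fv.span (ev ` Rk 0 2 2)" by (rule brs_T) simp_all
  also have "\<dots> = fv.span {ev 2}" by (simp add: Rk_def)
  finally show ?thesis .
qed

lemma noniso: "\<not> lie_iso 8 (T 1 1 0 0 0 0) (T 1 0 0 0 0 0)"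
proof
  let ?X = "T 1 1 0 0 0 0" and ?Y = "T 1 0 0 0 0 0"
  assume "lie_iso 8 ?X ?Y"
  then obtain f where bij: "bij_betw f (Vn 8) (Vn 8)"
    and add: "\<forall>x\<in>Vn 8. \<forall>y\<in>Vn 8. f (x + y) = f x + f y"
    and sc: "\<forall>x\<in>Vn 8. \<forall>a. f (fscale a x) = fscale a (f x)"
    and br: "\<forall>x\<in>Vn 8. \<forall>y\<in>Vn 8. f (lie_br 8 ?X x y) = lie_br 8 ?Y (f x) (f y)"
    unfolding lie_iso_def by blast
  have V: "\<And>k. k \<in> {1..8} \<Longrightarrow> ev k \<in> Vn 8" by (rule ev_Vn)
  have fV: "\<And>x. x \<in> Vn 8 \<Longrightarrow> f x \<in> Vn 8" using bij by (simp add: bij_betw_def image_subset_iff[symmetric]) blast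
  have z: "0 \<in> Vn 8" by (simp add: Vn_def)
  have f0: "f 0 = 0" using add z by (metis add.right_neutral add_left_imp_eq)
  have inj: "\<And>x y. x \<in> Vn 8 \<Longrightarrow> y \<in> Vn 8 \<Longrightarrow> f x = f y \<Longrightarrow> x = y"
    using bij unfolding bij_betw_def inj_on_def by blast
  have brf: "\<And>a b. a \<in> {1..8} \<Longrightarrow> b \<in> {1..8} \<Longrightarrow> f (lie_br 8 ?X (ev a) (ev b)) = lie_br 8 ?Y (f (ev a)) (f (ev b))"
    using br V by blast
  have e1: "\<And>h. 3 \<le> h \<Longrightarrow> h \<le> 8 \<Longrightarrow> lie_br 8 ?X (ev 1) (ev h) = ev (h - 1)"
    by (rule T_e1) simp_all
  have fe: "\<And>h. 3 \<le> h \<Longrightarrow> h \<le> 8 \<Longrightarrow> f (ev (h - 1)) = lie_br 8 ?Y (f (ev 1)) (f (ev h))"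
    using brf e1 by (metis atLeastAtMost_iff le_numeral_extra(4) one_le_numeral order.trans)
  have X67: "lie_br 8 ?X (ev 6) (ev 7) = ev 3" using BT67[of 1 1 0 0 0 0] by simp
  have X56: "lie_br 8 ?X (ev 5) (ev 6) = fscale (-1) (ev 2)" using BT56[of 1 1 0 0 0 0] by simp
  have f3: "f (ev 3) \<in> fv.span {ev 2}"
  proof -
    have "f (ev 3) = lie_br 8 ?Y (f (ev 6)) (f (ev 7))" using brf[of 6 7] X67 by simp
    also have "\<dots> = lie_br 8 ?Y (lie_br 8 ?Y (f (ev 1)) (f (ev 7))) (lie_br 8 ?Y (f (ev 1)) (f (ev 8)))"
      using fe[of 7] fe[of 8] by simp
    finally show ?thesis using Y2 fV V by simp
  qed
  have f2': "f (fscale (-1) (ev 2)) \<in> fv.span {ev 2}"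
  proof -
    have "f (fscale (-1) (ev 2)) = lie_br 8 ?Y (f (ev 5)) (f (ev 6))" using brf[of 5 6] X56 by simp
    also have "\<dots> = lie_br 8 ?Y (lie_br 8 ?Y (f (ev 1)) (f (ev 6))) (lie_br 8 ?Y (f (ev 1)) (f (ev 7)))"
      using fe[of 6] fe[of 7] by simp
    finally show ?thesis using Y2 fV V by simp
  qed
  have v2: "ev 2 \<in> Vn 8" and v3: "ev 3 \<in> Vn 8" by (rule V, simp)+
  have s1: "f (fscale (-1) (ev 2)) = fscale (-1) (f (ev 2))" by (rule sc[rule_format, OF v2])
  have s2: "fscale (-1) (f (fscale (-1) (ev 2))) = f (ev 2)" unfolding s1 by (simp add: fscale_def)
  have "fscale (-1) (f (fscale (-1) (ev 2))) \<in> fv.span {ev 2}" using f2' by (rule fv.span_scale)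
  then have f2: "f (ev 2) \<in> fv.span {ev 2}" unfolding s2 .
  obtain mu where mu: "f (ev 2) = fscale mu (ev 2)" using f2 unfolding fv.span_singleton by blast
  obtain la where la: "f (ev 3) = fscale la (ev 2)" using f3 unfolding fv.span_singleton by blast
  let ?w = "fscale la (ev 2) + fscale (-mu) (ev 3)"
  have wV: "fscale la (ev 2) \<in> Vn 8" "fscale (-mu) (ev 3) \<in> Vn 8" "?w \<in> Vn 8"
    by (auto simp: Vn_def fscale_apply ev_apply)
  have t1: "f (fscale la (ev 2)) = fscale la (f (ev 2))" by (rule sc[rule_format, OF v2])
  have t2: "f (fscale (-mu) (ev 3)) = fscale (-mu) (f (ev 3))" by (rule sc[rule_format, OF v3])
  have "f ?w = f (fscale la (ev 2)) + f (fscale (-mu) (ev 3))" using add wV by blast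
  also have "\<dots> = fscale la (f (ev 2)) + fscale (-mu) (f (ev 3))" by (simp only: t1 t2)
  finally have "f ?w = fscale la (f (ev 2)) + fscale (-mu) (f (ev 3))" .
  also have "\<dots> = 0" unfolding mu la by (simp add: fscale_def fun_eq_iff)
  finally have "?w = 0" using inj wV z f0 by metis
  then have "?w 3 = 0" by simp
  then have "mu = 0" by (simp add: fscale_apply ev_apply)
  then have "f (ev 2) = f 0" using mu f0 by simp
  then have "ev 2 = 0" using inj V[of 2] z by simp
  then show False by (metis ev_apply one_neq_zero zero_fun_apply)
qed


theorem mainTheorem17:
  fixes c :: sconst
    and a1 a2 g1 g2 b12 b22 b13 b23 b33 :: complex
  assumes lie: "is_lie_algebra 8 c"
    and fil: "filiform 8 c"
    and adp: "adapted 8 c"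
    and nm: "non_model 8 c"
    and tz1: "z1 8 c = 4"
    and tz2: "z2 8 c = 5"
    and law: "law458 c a1 a2 g1 g2 b12 b22 b13 b23 b33"
  shows "a1 = 0 \<and> a2 = - g1 \<and> g2 = - (5/2) * b12 \<and> g1 \<noteq> 0
    \<and> brs 8 c (lcs 8 c 3) (lcs 8 c 3) = fv.span {ev 2}
    \<and> brs 8 c (lcs 8 c 3) (lcs 8 c 4) = fv.span {ev 2}
    \<and> brs 8 c (lcs 8 c 3) (lcs 8 c 5) = {0}
    \<and> brs 8 c (lcs 8 c 2) (lcs 8 c 2) = fv.span {ev 2, fscale b12 (ev 3)}
    \<and> brs 8 c (lcs 8 c 2) (lcs 8 c 3) = fv.span {ev 2, fscale b12 (ev 3)}
    \<and> brs 8 c (lcs 8 c 2) (lcs 8 c 4) = fv.span {ev 2}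
    \<and> brs 8 c (lcs 8 c 2) (lcs 8 c 5) = fv.span {ev 2}
    \<and> brs 8 c (lcs 8 c 2) (lcs 8 c 6) = {0}
    \<and> (let cc = (if b12 \<noteq> 0 then 2 else 1 :: int) in
         HP 8 c - HP0 8 =
           (\<lambda>k l. cc * (mon 2 2 + mon 2 3 + mon 3 2) k l)
           + (mon 2 4 + mon 3 3 + mon 4 2)
           + (mon 2 5 + mon 3 4 + mon 4 3 + mon 5 2))
    \<and> (\<exists>c1 p1 p2 p3 p4 p5 p6 p7 p8 p9 c2 q1 q2 q3 q4 q5 q6 q7 q8 q9.
         fil458 c1 p1 p2 p3 p4 p5 p6 p7 p8 p9 \<and> p5 \<noteq> 0 \<and>
         fil458 c2 q1 q2 q3 q4 q5 q6 q7 q8 q9 \<and> q5 = 0 \<and>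
         HP 8 c1 \<noteq> HP 8 c2 \<and> \<not> lie_iso 8 c1 c2)"
proof -
  let ?T = "T g1 b12 b22 b13 b23 b33"
  have g1: "g1 \<noteq> 0" by (rule c_g1[OF lie adp law nm tz2])
  have e: "lie_br 8 c = lie_br 8 ?T" by (rule c_T[OF lie adp law nm tz2])
  have lcsE: "\<And>k. lcs 8 c k = lcs 8 ?T k" by (rule lcs_cong[OF e])
  have brsE: "\<And>A B. brs 8 c A B = brs 8 ?T A B" by (simp add: brs_cong[OF e])
  have HPE: "HP 8 c = HP 8 ?T" by (intro ext) (simp add: HP_def lcsE brsE)
  have BR: "\<And>k l. 2 \<le> k \<Longrightarrow> 2 \<le> l \<Longrightarrow> brs 8 c (lcs 8 c k) (lcs 8 c l) = fv.span (ev ` Rk b12 k l)"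
    unfolding lcsE brsE by (rule brs_T[OF g1])
  have P1: "a1 = 0 \<and> a2 = - g1 \<and> g2 = - (5/2) * b12 \<and> g1 \<noteq> 0"
    using c_a1[OF lie adp law] c_a2[OF lie adp law] c_g2'[OF lie adp law nm tz2] g1 by simp
  have P2: "brs 8 c (lcs 8 c 3) (lcs 8 c 3) = fv.span {ev 2}
    \<and> brs 8 c (lcs 8 c 3) (lcs 8 c 4) = fv.span {ev 2}
    \<and> brs 8 c (lcs 8 c 3) (lcs 8 c 5) = {0}
    \<and> brs 8 c (lcs 8 c 2) (lcs 8 c 2) = fv.span {ev 2, fscale b12 (ev 3)}
    \<and> brs 8 c (lcs 8 c 2) (lcs 8 c 3) = fv.span {ev 2, fscale b12 (ev 3)}
    \<and> brs 8 c (lcs 8 c 2) (lcs 8 c 4) = fv.span {ev 2}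
    \<and> brs 8 c (lcs 8 c 2) (lcs 8 c 5) = fv.span {ev 2}
    \<and> brs 8 c (lcs 8 c 2) (lcs 8 c 6) = {0}"
  proof -
    have R23: "Rk b12 2 3 = Rk b12 2 2" by (simp add: Rk_def)
    show ?thesis using BR[of 2 2] BR[of 2 3] V2[of b12] R23
      by (simp add: BR Rk_def del: lcs.simps)
  qed
  have P3: "let cc = (if b12 \<noteq> 0 then 2 else 1 :: int) in
         HP 8 c - HP0 8 =
           (\<lambda>k l. cc * (mon 2 2 + mon 2 3 + mon 3 2) k l)
           + (mon 2 4 + mon 3 3 + mon 4 2)
           + (mon 2 5 + mon 3 4 + mon 4 3 + mon 5 2)"
    unfolding Let_def
  proof (intro ext)
    fix k l :: nat
    have "(HP 8 c - HP0 8) k l = HP 8 ?T k l - HP0 8 k l" by (simp add: HPE)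
    also have "\<dots> = (if 2 \<le> k \<and> 2 \<le> l then (if k + l \<le> 5 then (if b12 \<noteq> 0 then 2 else 1) else if k + l \<le> 7 then 1 else 0) else 0)"
      by (rule HP_T[OF g1])
    also have "\<dots> = ((\<lambda>k l. (if b12 \<noteq> 0 then 2 else 1 :: int) * (mon 2 2 + mon 2 3 + mon 3 2) k l)
           + (mon 2 4 + mon 3 3 + mon 4 2)
           + (mon 2 5 + mon 3 4 + mon 4 3 + mon 5 2)) k l"
    proof (cases "k \<le> 5 \<and> l \<le> 5")
      case True
      then have "k = 0 \<or> k = 1 \<or> k = 2 \<or> k = 3 \<or> k = 4 \<or> k = 5" "l = 0 \<or> l = 1 \<or> l = 2 \<or> l = 3 \<or> l = 4 \<or> l = 5" by arith+
      then show ?thesis by (elim disjE; simp add: mon_def)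
    next
      case False
      then have "\<not> (2 \<le> k \<and> 2 \<le> l \<and> k + l \<le> 7)" by arith
      moreover have "\<And>i j. i \<le> 5 \<Longrightarrow> j \<le> 5 \<Longrightarrow> mon i j k l = 0" using False by (auto simp: mon_def)
      ultimately show ?thesis by (auto simp del: mon_def)
    qed
    finally show "(HP 8 c - HP0 8) k l = ((\<lambda>k l. (if b12 \<noteq> 0 then 2 else 1 :: int) * (mon 2 2 + mon 2 3 + mon 3 2) k l)
           + (mon 2 4 + mon 3 3 + mon 4 2)
           + (mon 2 5 + mon 3 4 + mon 4 3 + mon 5 2)) k l" .
  qed
  have P4: "\<exists>c1 p1 p2 p3 p4 p5 p6 p7 p8 p9 c2 q1 q2 q3 q4 q5 q6 q7 q8 q9.
         fil458 c1 p1 p2 p3 p4 p5 p6 p7 p8 p9 \<and> p5 \<noteq> 0 \<and>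
         fil458 c2 q1 q2 q3 q4 q5 q6 q7 q8 q9 \<and> q5 = 0 \<and>
         HP 8 c1 \<noteq> HP 8 c2 \<and> \<not> lie_iso 8 c1 c2"
  proof (intro exI conjI)
    show "fil458 (T 1 1 0 0 0 0) 0 (-1) 1 (-(5/2)*1) 1 0 0 0 0"
      using T_fil458[of 1 1 0 0 0 0] by simp
    show "fil458 (T 1 0 0 0 0 0) 0 (-1) 1 (-(5/2)*0) 0 0 0 0 0"
      using T_fil458[of 1 0 0 0 0 0] by simp
    show "(1::complex) \<noteq> 0" by simp
    show "(0::complex) = 0" by simp
    show "HP 8 (T 1 1 0 0 0 0) \<noteq> HP 8 (T 1 0 0 0 0 0)"
    proof
      assume "HP 8 (T 1 1 0 0 0 0) = HP 8 (T 1 0 0 0 0 0)"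
      then have "HP 8 (T 1 1 0 0 0 0) 2 2 - HP0 8 2 2 = HP 8 (T 1 0 0 0 0 0) 2 2 - HP0 8 2 2" by simp
      then show False using HP_T[of 1 1 0 0 0 0 2 2] HP_T[of 1 0 0 0 0 0 2 2] by simp
    qed
    show "\<not> lie_iso 8 (T 1 1 0 0 0 0) (T 1 0 0 0 0 0)" by (rule noniso)
  qed
  have X: "(a1 = 0 \<and> a2 = - g1 \<and> g2 = - (5/2) * b12 \<and> g1 \<noteq> 0) \<and> ((brs 8 c (lcs 8 c 3) (lcs 8 c 3) = fv.span {ev 2}
    \<and> brs 8 c (lcs 8 c 3) (lcs 8 c 4) = fv.span {ev 2}
    \<and> brs 8 c (lcs 8 c 3) (lcs 8 c 5) = {0}
    \<and> brs 8 c (lcs 8 c 2) (lcs 8 c 2) = fv.span {ev 2, fscale b12 (ev 3)}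
    \<and> brs 8 c (lcs 8 c 2) (lcs 8 c 3) = fv.span {ev 2, fscale b12 (ev 3)}
    \<and> brs 8 c (lcs 8 c 2) (lcs 8 c 4) = fv.span {ev 2}
    \<and> brs 8 c (lcs 8 c 2) (lcs 8 c 5) = fv.span {ev 2}
    \<and> brs 8 c (lcs 8 c 2) (lcs 8 c 6) = {0}) \<and> ((let cc = (if b12 \<noteq> 0 then 2 else 1 :: int) in
         HP 8 c - HP0 8 =
           (\<lambda>k l. cc * (mon 2 2 + mon 2 3 + mon 3 2) k l)
           + (mon 2 4 + mon 3 3 + mon 4 2)
           + (mon 2 5 + mon 3 4 + mon 4 3 + mon 5 2)) \<and> (\<exists>c1 p1 p2 p3 p4 p5 p6 p7 p8 p9 c2 q1 q2 q3 q4 q5 q6 q7 q8 q9.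
         fil458 c1 p1 p2 p3 p4 p5 p6 p7 p8 p9 \<and> p5 \<noteq> 0 \<and>
         fil458 c2 q1 q2 q3 q4 q5 q6 q7 q8 q9 \<and> q5 = 0 \<and>
         HP 8 c1 \<noteq> HP 8 c2 \<and> \<not> lie_iso 8 c1 c2)))"
    by (rule conjI[OF P1 conjI[OF P2 conjI[OF P3 P4]]])
  then show ?thesis unfolding conj_assoc by assumption
qed


end
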